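(* Let $\mathfrak g$ be a finite-dimensional simple complex Lie algebra of rank $n$ and $m=|\Psi_{\min}|$. Then: (i) $m=n$ if and only if $\mathfrak g$ is of type $A_1$, $B_n$, $C_n$, $D_n$ with $n=2k+2$, $E_7$, $E_8$, $F_4$ or $G_2$; (ii) $m=14$ if $\mathfrak g$ is of type $E_6$; (iii) $m=n+1$ if $\mathfrak g$ is of type $D_n$ with $n=2k+3$; (iv) $m\ge n+1$ if $\mathfrak g$ is of type $A_n$ with $n\ge2$.
   Context: With root lattice $Q$ and dominant integral weights $\Lambda^+$ of $\mathfrak g$, let $\Psi=\{\lambda\in\Lambda^+:2\lambda\in Q\}$ and $\Psi_{\min}=\{\lambda\in\Psi\setminus\{0\}:\lambda\ne\mu_1+\mu_2\text{ for all }\mu_1,\mu_2\in\Psi\setminus\{0\}\}$. *)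

theory Defs
  imports Main
begin

text \<open>Cartan--Killing types of finite-dimensional simple complex Lie algebras.
  Simple roots, Cartan matrix and fundamental weights use Bourbaki numbering.\<close>

datatype cartan_type = A nat | B nat | C nat | D nat | E6 | E7 | E8 | F4 | G2

fun valid_type :: "cartan_type \<Rightarrow> bool" where
  "valid_type (A n) = (n \<ge> 1)"
| "valid_type (B n) = (n \<ge> 2)"
| "valid_type (C n) = (n \<ge> 3)"
| "valid_type (D n) = (n \<ge> 4)"
| "valid_type _ = True"

fun rank :: "cartan_type \<Rightarrow> nat" where
  "rank (A n) = n" | "rank (B n) = n" | "rank (C n) = n" | "rank (D n) = n"
| "rank E6 = 6" | "rank E7 = 7" | "rank E8 = 8" | "rank F4 = 4" | "rank G2 = 2"

definition chain_adj :: "nat \<Rightarrow> nat \<Rightarrow> bool" where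
  "chain_adj i j \<longleftrightarrow> i + 1 = j \<or> j + 1 = i"

fun dyn_adj :: "cartan_type \<Rightarrow> nat \<Rightarrow> nat \<Rightarrow> bool" where
  "dyn_adj (A n) i j = chain_adj i j"
| "dyn_adj (B n) i j = chain_adj i j"
| "dyn_adj (C n) i j = chain_adj i j"
| "dyn_adj (D n) i j =
     ((chain_adj i j \<and> i \<le> n - 1 \<and> j \<le> n - 1) \<or> {i, j} = {n - 2, n})"
| "dyn_adj E6 i j = ({i,j} \<in> {{1,3},{3,4},{4,5},{5,6},{2,4}})"
| "dyn_adj E7 i j = ({i,j} \<in> {{1,3},{3,4},{4,5},{5,6},{6,7},{2,4}})"
| "dyn_adj E8 i j = ({i,j} \<in> {{1,3},{3,4},{4,5},{5,6},{6,7},{7,8},{2,4}})"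
| "dyn_adj F4 i j = chain_adj i j"
| "dyn_adj G2 i j = chain_adj i j"

text \<open>Cartan integers \<open>cartan t i j = \<langle>\<alpha>_i, \<alpha>_j^\<or>\<rangle>\<close> for \<open>1 \<le> i, j \<le> rank t\<close>,
  i.e. the coefficient of the fundamental weight \<open>\<omega>_j\<close> in the simple root \<open>\<alpha>_i\<close>.\<close>
definition cartan :: "cartan_type \<Rightarrow> nat \<Rightarrow> nat \<Rightarrow> int" where
  "cartan t i j =
    (if i = j then 2
     else if \<not> dyn_adj t i j then 0
     else (case t of
             B n \<Rightarrow> if i = n - 1 \<and> j = n then -2 else -1
           | C n \<Rightarrow> if i = n \<and> j = n - 1 then -2 else -1
           | F4 \<Rightarrow> if i = 2 \<and> j = 3 then -2 else -1
           | G2 \<Rightarrow> if i = 2 \<and> j = 1 then -3 else -1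
           | _ \<Rightarrow> -1))"

text \<open>Integral weights, written in the basis of fundamental weights
  (coordinates indexed by \<open>{1..rank t}\<close>, zero elsewhere).\<close>
definition weights :: "cartan_type \<Rightarrow> (nat \<Rightarrow> int) set" where
  "weights t = {w. \<forall>i. i \<notin> {1..rank t} \<longrightarrow> w i = 0}"

definition root_lattice :: "cartan_type \<Rightarrow> (nat \<Rightarrow> int) set" where
  "root_lattice t = {w \<in> weights t. \<exists>c :: nat \<Rightarrow> int.
       \<forall>j \<in> {1..rank t}. w j = (\<Sum>i\<in>{1..rank t}. c i * cartan t i j)}"

definition dominant :: "cartan_type \<Rightarrow> (nat \<Rightarrow> int) set" where
  "dominant t = {w \<in> weights t. \<forall>i. 0 \<le> w i}"

definition Psi :: "cartan_type \<Rightarrow> (nat \<Rightarrow> int) set" where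
  "Psi t = {w \<in> dominant t. (\<lambda>i. 2 * w i) \<in> root_lattice t}"

definition Psi_min :: "cartan_type \<Rightarrow> (nat \<Rightarrow> int) set" where
  "Psi_min t = {w \<in> Psi t - {\<lambda>i. 0}.
     \<not> (\<exists>\<mu>1 \<in> Psi t - {\<lambda>i. 0}. \<exists>\<mu>2 \<in> Psi t - {\<lambda>i. 0}. w = (\<lambda>i. \<mu>1 i + \<mu>2 i))}"

end

theory Submission
  imports Defs
begin

lemma weights_add: "v \<in> weights t \<Longrightarrow> u \<in> weights t \<Longrightarrow> (\<lambda>j. v j + u j) \<in> weights t"
  by (auto simp: weights_def)

lemma RL_intro:
  "v \<in> weights t \<Longrightarrow> \<forall>j\<in>{1..rank t}. v j = (\<Sum>i\<in>{1..rank t}. c i * cartan t i j) \<Longrightarrow> v \<in> root_lattice t"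
  unfolding root_lattice_def by blast

lemma RL_add:
  assumes "v \<in> root_lattice t" "u \<in> root_lattice t"
  shows "(\<lambda>j. v j + u j) \<in> root_lattice t"
proof -
  from assms obtain c d where c: "\<forall>j\<in>{1..rank t}. v j = (\<Sum>i\<in>{1..rank t}. c i * cartan t i j)"
    and d: "\<forall>j\<in>{1..rank t}. u j = (\<Sum>i\<in>{1..rank t}. d i * cartan t i j)"
    and w: "v \<in> weights t" "u \<in> weights t"
    by (auto simp: root_lattice_def)
  have "\<forall>j\<in>{1..rank t}. v j + u j = (\<Sum>i\<in>{1..rank t}. (c i + d i) * cartan t i j)"
    using c d by (simp add: distrib_right sum.distrib)
  then show ?thesis using w weights_add by (intro RL_intro)
qed

lemma RL_smult:
  assumes "v \<in> root_lattice t"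
  shows "(\<lambda>j. a * v j) \<in> root_lattice t"
proof -
  from assms obtain c where c: "\<forall>j\<in>{1..rank t}. v j = (\<Sum>i\<in>{1..rank t}. c i * cartan t i j)"
    and w: "v \<in> weights t"
    by (auto simp: root_lattice_def)
  have "\<forall>j\<in>{1..rank t}. a * v j = (\<Sum>i\<in>{1..rank t}. (a * c i) * cartan t i j)"
    using c by (simp add: sum_distrib_left mult.assoc)
  moreover have "(\<lambda>j. a * v j) \<in> weights t" using w by (auto simp: weights_def)
  ultimately show ?thesis by (intro RL_intro)
qed

lemma RL_zero: "(\<lambda>j. 0) \<in> root_lattice t"
  unfolding root_lattice_def weights_def by (rule CollectI, auto intro: exI[of _ "\<lambda>_. 0"])

lemma RL_diff:
  assumes "v \<in> root_lattice t" "u \<in> root_lattice t"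
  shows "(\<lambda>j. v j - u j) \<in> root_lattice t"
  using RL_add[OF assms(1) RL_smult[OF assms(2), of "-1"]] by simp

lemma RL_sum:
  assumes "finite S" "\<forall>i\<in>S. f i \<in> root_lattice t"
  shows "(\<lambda>j. \<Sum>i\<in>S. a i * f i j) \<in> root_lattice t"
  using assms
proof (induction S rule: finite_induct)
  case empty then show ?case using RL_zero by simp
next
  case (insert x F)
  have "(\<lambda>j. a x * f x j + (\<Sum>i\<in>F. a i * f i j)) \<in> root_lattice t"
    using insert RL_add RL_smult by blast
  then show ?case using insert by simp
qed

lemma Psi_below:
  assumes w: "w \<in> Psi_min t" and u: "u \<in> Psi t" "u \<noteq> (\<lambda>i. 0)" and le: "\<forall>i. u i \<le> w i"
  shows "u = w"
proof (rule ccontr)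
  assume ne: "u \<noteq> w"
  have wP: "w \<in> Psi t" using w by (simp add: Psi_min_def)
  let ?d = "\<lambda>i. w i - u i"
  have "?d \<in> dominant t" using wP u le by (auto simp: Psi_def dominant_def weights_def)
  moreover have "(\<lambda>i. 2 * ?d i) \<in> root_lattice t"
    using RL_diff[of "\<lambda>i. 2 * w i" t "\<lambda>i. 2 * u i"] wP u
    by (simp add: Psi_def right_diff_distrib)
  ultimately have "?d \<in> Psi t" by (simp add: Psi_def)
  moreover have "?d \<noteq> (\<lambda>i. 0)" using ne by (metis (no_types, lifting) eq_iff_diff_eq_0 ext)
  ultimately have d: "?d \<in> Psi t - {\<lambda>i. 0}" by simp
  have u': "u \<in> Psi t - {\<lambda>i. 0}" using u by simp
  have nd: "\<not> (\<exists>\<mu>1\<in>Psi t - {\<lambda>i. 0}. \<exists>\<mu>2\<in>Psi t - {\<lambda>i. 0}. w = (\<lambda>i. \<mu>1 i + \<mu>2 i))"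
    using w unfolding Psi_min_def by blast
  have "\<exists>\<mu>1\<in>Psi t - {\<lambda>i. 0}. \<exists>\<mu>2\<in>Psi t - {\<lambda>i. 0}. w = (\<lambda>i. \<mu>1 i + \<mu>2 i)"
    apply (rule bexI[where x=u])
     apply (rule bexI[where x="?d"])
    using d u' by auto
  then show False using nd by blast
qed

lemma decomp_le:
  assumes "w = (\<lambda>i. a i + b i)" "b \<in> Psi t"
  shows "a i \<le> w i"
  using assms by (auto simp: Psi_def dominant_def)

definition om :: "nat \<Rightarrow> nat \<Rightarrow> int" where "om i j = (if j = i then 1 else 0)"

lemma Psi_min_intro:
  assumes w: "w \<in> Psi t" "w \<noteq> (\<lambda>i. 0)"
    and h: "\<And>u. u \<in> Psi t \<Longrightarrow> u \<noteq> (\<lambda>i. 0) \<Longrightarrow> \<forall>i. u i \<le> w i \<Longrightarrow> u = w"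
  shows "w \<in> Psi_min t"
proof -
  have "\<not> (\<exists>\<mu>1\<in>Psi t - {\<lambda>i. 0}. \<exists>\<mu>2\<in>Psi t - {\<lambda>i. 0}. w = (\<lambda>i. \<mu>1 i + \<mu>2 i))"
  proof
    assume "\<exists>\<mu>1\<in>Psi t - {\<lambda>i. 0}. \<exists>\<mu>2\<in>Psi t - {\<lambda>i. 0}. w = (\<lambda>i. \<mu>1 i + \<mu>2 i)"
    then obtain a b where a: "a \<in> Psi t" "a \<noteq> (\<lambda>i. 0)" and b: "b \<in> Psi t" "b \<noteq> (\<lambda>i. 0)"
      and e: "w = (\<lambda>i. a i + b i)" by blast
    have "\<forall>i. a i \<le> w i" using decomp_le[OF e b(1)] by blast
    then have "a = w" using h a by blast
    then have "b = (\<lambda>i. 0)" using e by (metis add_cancel_right_right ext fun_cong)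
    then show False using b by blast
  qed
  then show ?thesis using w unfolding Psi_min_def by blast
qed

lemma Psi_min_Psi: "w \<in> Psi_min t \<Longrightarrow> w \<in> Psi t" and Psi_min_nz: "w \<in> Psi_min t \<Longrightarrow> w \<noteq> (\<lambda>i. 0)"
  by (auto simp: Psi_min_def)

lemma Psi_nonneg: "w \<in> Psi t \<Longrightarrow> 0 \<le> w i"
  by (auto simp: Psi_def dominant_def)

lemma Psi_out: "w \<in> Psi t \<Longrightarrow> i \<notin> {1..rank t} \<Longrightarrow> w i = 0"
  by (auto simp: Psi_def dominant_def weights_def)

lemma nz_coord:
  assumes "w \<in> Psi t" "w \<noteq> (\<lambda>i. 0)"
  obtains i where "i \<in> {1..rank t}" "w i \<ge> 1"
proof -
  obtain i where "w i \<noteq> 0" using assms(2) by auto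
  moreover have "i \<in> {1..rank t}" using calculation Psi_out[OF assms(1)] by blast
  moreover have "w i \<ge> 1" using calculation Psi_nonneg[OF assms(1), of i] by simp
  ultimately show ?thesis using that by blast
qed

lemma om_Psi:
  assumes "i \<in> {1..rank t}" "(\<lambda>j. 2 * om i j) \<in> root_lattice t"
  shows "om i \<in> Psi t"
  using assms unfolding Psi_def dominant_def weights_def om_def by auto

lemma om_nz: "om i \<noteq> (\<lambda>j. 0)"
  by (metis om_def one_neq_zero)

lemma om_min:
  assumes "i \<in> {1..rank t}" "(\<lambda>j. 2 * om i j) \<in> root_lattice t"
  shows "om i \<in> Psi_min t"
proof (rule Psi_min_intro[OF om_Psi[OF assms] om_nz])
  fix u assume u: "u \<in> Psi t" "u \<noteq> (\<lambda>i. 0)" "\<forall>j. u j \<le> om i j"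
  obtain k where k: "u k \<ge> 1" using nz_coord[OF u(1,2)] by blast
  have "k = i" using u(3)[rule_format, of k] k by (simp add: om_def split: if_splits)
  show "u = om i"
  proof
    fix j show "u j = om i j"
      using u(3) k \<open>k = i\<close> Psi_nonneg[OF u(1), of j] by (smt (verit) om_def)
  qed
qed

lemma exp2:
  assumes "\<forall>i\<in>{1..rank t}. (\<lambda>j. 2 * om i j) \<in> root_lattice t"
  shows "card (Psi_min t) = rank t"
proof -
  have "Psi_min t = om ` {1..rank t}"
  proof
    show "om ` {1..rank t} \<subseteq> Psi_min t" using om_min assms by blast
  next
    show "Psi_min t \<subseteq> om ` {1..rank t}"
    proof
      fix w assume w: "w \<in> Psi_min t"
      obtain i where i: "i \<in> {1..rank t}" "w i \<ge> 1"
        using nz_coord[OF Psi_min_Psi[OF w] Psi_min_nz[OF w]] by blast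
      have "\<forall>j. om i j \<le> w j" using i Psi_nonneg[OF Psi_min_Psi[OF w]] by (simp add: om_def)
      then have "om i = w" using Psi_below[OF w om_Psi[OF i(1)] om_nz] assms i(1) by blast
      then show "w \<in> om ` {1..rank t}" using i(1) by blast
    qed
  qed
  moreover have "inj om" by (rule injI) (metis om_def zero_neq_one)
  ultimately show ?thesis by (simp add: card_image inj_on_subset[of om UNIV])
qed

lemma ct_G2_1_1_00 [simp]: "cartan G2 1 1 = 2" by (simp add: cartan_def chain_adj_def doubleton_eq_iff)
lemma ct_G2_1_1_01 [simp]: "cartan G2 1 (Suc 0) = 2" by (simp add: cartan_def chain_adj_def doubleton_eq_iff)
lemma ct_G2_1_1_10 [simp]: "cartan G2 (Suc 0) 1 = 2" by (simp add: cartan_def chain_adj_def doubleton_eq_iff)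
lemma ct_G2_1_1_11 [simp]: "cartan G2 (Suc 0) (Suc 0) = 2" by (simp add: cartan_def chain_adj_def doubleton_eq_iff)
lemma ct_G2_1_2_00 [simp]: "cartan G2 1 2 = - 1" by (simp add: cartan_def chain_adj_def doubleton_eq_iff)
lemma ct_G2_1_2_10 [simp]: "cartan G2 (Suc 0) 2 = - 1" by (simp add: cartan_def chain_adj_def doubleton_eq_iff)
lemma ct_G2_2_1_00 [simp]: "cartan G2 2 1 = - 3" by (simp add: cartan_def chain_adj_def doubleton_eq_iff)
lemma ct_G2_2_1_01 [simp]: "cartan G2 2 (Suc 0) = - 3" by (simp add: cartan_def chain_adj_def doubleton_eq_iff)
lemma ct_G2_2_2_00 [simp]: "cartan G2 2 2 = 2" by (simp add: cartan_def chain_adj_def doubleton_eq_iff)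
lemma ct_F4_1_1_00 [simp]: "cartan F4 1 1 = 2" by (simp add: cartan_def chain_adj_def doubleton_eq_iff)
lemma ct_F4_1_1_01 [simp]: "cartan F4 1 (Suc 0) = 2" by (simp add: cartan_def chain_adj_def doubleton_eq_iff)
lemma ct_F4_1_1_10 [simp]: "cartan F4 (Suc 0) 1 = 2" by (simp add: cartan_def chain_adj_def doubleton_eq_iff)
lemma ct_F4_1_1_11 [simp]: "cartan F4 (Suc 0) (Suc 0) = 2" by (simp add: cartan_def chain_adj_def doubleton_eq_iff)
lemma ct_F4_1_2_00 [simp]: "cartan F4 1 2 = - 1" by (simp add: cartan_def chain_adj_def doubleton_eq_iff)
lemma ct_F4_1_2_10 [simp]: "cartan F4 (Suc 0) 2 = - 1" by (simp add: cartan_def chain_adj_def doubleton_eq_iff)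
lemma ct_F4_1_3_00 [simp]: "cartan F4 1 3 = 0" by (simp add: cartan_def chain_adj_def doubleton_eq_iff)
lemma ct_F4_1_3_10 [simp]: "cartan F4 (Suc 0) 3 = 0" by (simp add: cartan_def chain_adj_def doubleton_eq_iff)
lemma ct_F4_1_4_00 [simp]: "cartan F4 1 4 = 0" by (simp add: cartan_def chain_adj_def doubleton_eq_iff)
lemma ct_F4_1_4_10 [simp]: "cartan F4 (Suc 0) 4 = 0" by (simp add: cartan_def chain_adj_def doubleton_eq_iff)
lemma ct_F4_2_1_00 [simp]: "cartan F4 2 1 = - 1" by (simp add: cartan_def chain_adj_def doubleton_eq_iff)
lemma ct_F4_2_1_01 [simp]: "cartan F4 2 (Suc 0) = - 1" by (simp add: cartan_def chain_adj_def doubleton_eq_iff)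
lemma ct_F4_2_2_00 [simp]: "cartan F4 2 2 = 2" by (simp add: cartan_def chain_adj_def doubleton_eq_iff)
lemma ct_F4_2_3_00 [simp]: "cartan F4 2 3 = - 2" by (simp add: cartan_def chain_adj_def doubleton_eq_iff)
lemma ct_F4_2_4_00 [simp]: "cartan F4 2 4 = 0" by (simp add: cartan_def chain_adj_def doubleton_eq_iff)
lemma ct_F4_3_1_00 [simp]: "cartan F4 3 1 = 0" by (simp add: cartan_def chain_adj_def doubleton_eq_iff)
lemma ct_F4_3_1_01 [simp]: "cartan F4 3 (Suc 0) = 0" by (simp add: cartan_def chain_adj_def doubleton_eq_iff)
lemma ct_F4_3_2_00 [simp]: "cartan F4 3 2 = - 1" by (simp add: cartan_def chain_adj_def doubleton_eq_iff)
lemma ct_F4_3_3_00 [simp]: "cartan F4 3 3 = 2" by (simp add: cartan_def chain_adj_def doubleton_eq_iff)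
lemma ct_F4_3_4_00 [simp]: "cartan F4 3 4 = - 1" by (simp add: cartan_def chain_adj_def doubleton_eq_iff)
lemma ct_F4_4_1_00 [simp]: "cartan F4 4 1 = 0" by (simp add: cartan_def chain_adj_def doubleton_eq_iff)
lemma ct_F4_4_1_01 [simp]: "cartan F4 4 (Suc 0) = 0" by (simp add: cartan_def chain_adj_def doubleton_eq_iff)
lemma ct_F4_4_2_00 [simp]: "cartan F4 4 2 = 0" by (simp add: cartan_def chain_adj_def doubleton_eq_iff)
lemma ct_F4_4_3_00 [simp]: "cartan F4 4 3 = - 1" by (simp add: cartan_def chain_adj_def doubleton_eq_iff)
lemma ct_F4_4_4_00 [simp]: "cartan F4 4 4 = 2" by (simp add: cartan_def chain_adj_def doubleton_eq_iff)
lemma ct_E6_1_1_00 [simp]: "cartan E6 1 1 = 2" by (simp add: cartan_def chain_adj_def doubleton_eq_iff)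
lemma ct_E6_1_1_01 [simp]: "cartan E6 1 (Suc 0) = 2" by (simp add: cartan_def chain_adj_def doubleton_eq_iff)
lemma ct_E6_1_1_10 [simp]: "cartan E6 (Suc 0) 1 = 2" by (simp add: cartan_def chain_adj_def doubleton_eq_iff)
lemma ct_E6_1_1_11 [simp]: "cartan E6 (Suc 0) (Suc 0) = 2" by (simp add: cartan_def chain_adj_def doubleton_eq_iff)
lemma ct_E6_1_2_00 [simp]: "cartan E6 1 2 = 0" by (simp add: cartan_def chain_adj_def doubleton_eq_iff)
lemma ct_E6_1_2_10 [simp]: "cartan E6 (Suc 0) 2 = 0" by (simp add: cartan_def chain_adj_def doubleton_eq_iff)
lemma ct_E6_1_3_00 [simp]: "cartan E6 1 3 = - 1" by (simp add: cartan_def chain_adj_def doubleton_eq_iff)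
lemma ct_E6_1_3_10 [simp]: "cartan E6 (Suc 0) 3 = - 1" by (simp add: cartan_def chain_adj_def doubleton_eq_iff)
lemma ct_E6_1_4_00 [simp]: "cartan E6 1 4 = 0" by (simp add: cartan_def chain_adj_def doubleton_eq_iff)
lemma ct_E6_1_4_10 [simp]: "cartan E6 (Suc 0) 4 = 0" by (simp add: cartan_def chain_adj_def doubleton_eq_iff)
lemma ct_E6_1_5_00 [simp]: "cartan E6 1 5 = 0" by (simp add: cartan_def chain_adj_def doubleton_eq_iff)
lemma ct_E6_1_5_10 [simp]: "cartan E6 (Suc 0) 5 = 0" by (simp add: cartan_def chain_adj_def doubleton_eq_iff)
lemma ct_E6_1_6_00 [simp]: "cartan E6 1 6 = 0" by (simp add: cartan_def chain_adj_def doubleton_eq_iff)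
lemma ct_E6_1_6_10 [simp]: "cartan E6 (Suc 0) 6 = 0" by (simp add: cartan_def chain_adj_def doubleton_eq_iff)
lemma ct_E6_2_1_00 [simp]: "cartan E6 2 1 = 0" by (simp add: cartan_def chain_adj_def doubleton_eq_iff)
lemma ct_E6_2_1_01 [simp]: "cartan E6 2 (Suc 0) = 0" by (simp add: cartan_def chain_adj_def doubleton_eq_iff)
lemma ct_E6_2_2_00 [simp]: "cartan E6 2 2 = 2" by (simp add: cartan_def chain_adj_def doubleton_eq_iff)
lemma ct_E6_2_3_00 [simp]: "cartan E6 2 3 = 0" by (simp add: cartan_def chain_adj_def doubleton_eq_iff)
lemma ct_E6_2_4_00 [simp]: "cartan E6 2 4 = - 1" by (simp add: cartan_def chain_adj_def doubleton_eq_iff)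
lemma ct_E6_2_5_00 [simp]: "cartan E6 2 5 = 0" by (simp add: cartan_def chain_adj_def doubleton_eq_iff)
lemma ct_E6_2_6_00 [simp]: "cartan E6 2 6 = 0" by (simp add: cartan_def chain_adj_def doubleton_eq_iff)
lemma ct_E6_3_1_00 [simp]: "cartan E6 3 1 = - 1" by (simp add: cartan_def chain_adj_def doubleton_eq_iff)
lemma ct_E6_3_1_01 [simp]: "cartan E6 3 (Suc 0) = - 1" by (simp add: cartan_def chain_adj_def doubleton_eq_iff)
lemma ct_E6_3_2_00 [simp]: "cartan E6 3 2 = 0" by (simp add: cartan_def chain_adj_def doubleton_eq_iff)
lemma ct_E6_3_3_00 [simp]: "cartan E6 3 3 = 2" by (simp add: cartan_def chain_adj_def doubleton_eq_iff)
lemma ct_E6_3_4_00 [simp]: "cartan E6 3 4 = - 1" by (simp add: cartan_def chain_adj_def doubleton_eq_iff)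
lemma ct_E6_3_5_00 [simp]: "cartan E6 3 5 = 0" by (simp add: cartan_def chain_adj_def doubleton_eq_iff)
lemma ct_E6_3_6_00 [simp]: "cartan E6 3 6 = 0" by (simp add: cartan_def chain_adj_def doubleton_eq_iff)
lemma ct_E6_4_1_00 [simp]: "cartan E6 4 1 = 0" by (simp add: cartan_def chain_adj_def doubleton_eq_iff)
lemma ct_E6_4_1_01 [simp]: "cartan E6 4 (Suc 0) = 0" by (simp add: cartan_def chain_adj_def doubleton_eq_iff)
lemma ct_E6_4_2_00 [simp]: "cartan E6 4 2 = - 1" by (simp add: cartan_def chain_adj_def doubleton_eq_iff)
lemma ct_E6_4_3_00 [simp]: "cartan E6 4 3 = - 1" by (simp add: cartan_def chain_adj_def doubleton_eq_iff)
lemma ct_E6_4_4_00 [simp]: "cartan E6 4 4 = 2" by (simp add: cartan_def chain_adj_def doubleton_eq_iff)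
lemma ct_E6_4_5_00 [simp]: "cartan E6 4 5 = - 1" by (simp add: cartan_def chain_adj_def doubleton_eq_iff)
lemma ct_E6_4_6_00 [simp]: "cartan E6 4 6 = 0" by (simp add: cartan_def chain_adj_def doubleton_eq_iff)
lemma ct_E6_5_1_00 [simp]: "cartan E6 5 1 = 0" by (simp add: cartan_def chain_adj_def doubleton_eq_iff)
lemma ct_E6_5_1_01 [simp]: "cartan E6 5 (Suc 0) = 0" by (simp add: cartan_def chain_adj_def doubleton_eq_iff)
lemma ct_E6_5_2_00 [simp]: "cartan E6 5 2 = 0" by (simp add: cartan_def chain_adj_def doubleton_eq_iff)
lemma ct_E6_5_3_00 [simp]: "cartan E6 5 3 = 0" by (simp add: cartan_def chain_adj_def doubleton_eq_iff)
lemma ct_E6_5_4_00 [simp]: "cartan E6 5 4 = - 1" by (simp add: cartan_def chain_adj_def doubleton_eq_iff)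
lemma ct_E6_5_5_00 [simp]: "cartan E6 5 5 = 2" by (simp add: cartan_def chain_adj_def doubleton_eq_iff)
lemma ct_E6_5_6_00 [simp]: "cartan E6 5 6 = - 1" by (simp add: cartan_def chain_adj_def doubleton_eq_iff)
lemma ct_E6_6_1_00 [simp]: "cartan E6 6 1 = 0" by (simp add: cartan_def chain_adj_def doubleton_eq_iff)
lemma ct_E6_6_1_01 [simp]: "cartan E6 6 (Suc 0) = 0" by (simp add: cartan_def chain_adj_def doubleton_eq_iff)
lemma ct_E6_6_2_00 [simp]: "cartan E6 6 2 = 0" by (simp add: cartan_def chain_adj_def doubleton_eq_iff)
lemma ct_E6_6_3_00 [simp]: "cartan E6 6 3 = 0" by (simp add: cartan_def chain_adj_def doubleton_eq_iff)
lemma ct_E6_6_4_00 [simp]: "cartan E6 6 4 = 0" by (simp add: cartan_def chain_adj_def doubleton_eq_iff)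
lemma ct_E6_6_5_00 [simp]: "cartan E6 6 5 = - 1" by (simp add: cartan_def chain_adj_def doubleton_eq_iff)
lemma ct_E6_6_6_00 [simp]: "cartan E6 6 6 = 2" by (simp add: cartan_def chain_adj_def doubleton_eq_iff)
lemma ct_E7_1_1_00 [simp]: "cartan E7 1 1 = 2" by (simp add: cartan_def chain_adj_def doubleton_eq_iff)
lemma ct_E7_1_1_01 [simp]: "cartan E7 1 (Suc 0) = 2" by (simp add: cartan_def chain_adj_def doubleton_eq_iff)
lemma ct_E7_1_1_10 [simp]: "cartan E7 (Suc 0) 1 = 2" by (simp add: cartan_def chain_adj_def doubleton_eq_iff)
lemma ct_E7_1_1_11 [simp]: "cartan E7 (Suc 0) (Suc 0) = 2" by (simp add: cartan_def chain_adj_def doubleton_eq_iff)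
lemma ct_E7_1_2_00 [simp]: "cartan E7 1 2 = 0" by (simp add: cartan_def chain_adj_def doubleton_eq_iff)
lemma ct_E7_1_2_10 [simp]: "cartan E7 (Suc 0) 2 = 0" by (simp add: cartan_def chain_adj_def doubleton_eq_iff)
lemma ct_E7_1_3_00 [simp]: "cartan E7 1 3 = - 1" by (simp add: cartan_def chain_adj_def doubleton_eq_iff)
lemma ct_E7_1_3_10 [simp]: "cartan E7 (Suc 0) 3 = - 1" by (simp add: cartan_def chain_adj_def doubleton_eq_iff)
lemma ct_E7_1_4_00 [simp]: "cartan E7 1 4 = 0" by (simp add: cartan_def chain_adj_def doubleton_eq_iff)
lemma ct_E7_1_4_10 [simp]: "cartan E7 (Suc 0) 4 = 0" by (simp add: cartan_def chain_adj_def doubleton_eq_iff)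
lemma ct_E7_1_5_00 [simp]: "cartan E7 1 5 = 0" by (simp add: cartan_def chain_adj_def doubleton_eq_iff)
lemma ct_E7_1_5_10 [simp]: "cartan E7 (Suc 0) 5 = 0" by (simp add: cartan_def chain_adj_def doubleton_eq_iff)
lemma ct_E7_1_6_00 [simp]: "cartan E7 1 6 = 0" by (simp add: cartan_def chain_adj_def doubleton_eq_iff)
lemma ct_E7_1_6_10 [simp]: "cartan E7 (Suc 0) 6 = 0" by (simp add: cartan_def chain_adj_def doubleton_eq_iff)
lemma ct_E7_1_7_00 [simp]: "cartan E7 1 7 = 0" by (simp add: cartan_def chain_adj_def doubleton_eq_iff)
lemma ct_E7_1_7_10 [simp]: "cartan E7 (Suc 0) 7 = 0" by (simp add: cartan_def chain_adj_def doubleton_eq_iff)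
lemma ct_E7_2_1_00 [simp]: "cartan E7 2 1 = 0" by (simp add: cartan_def chain_adj_def doubleton_eq_iff)
lemma ct_E7_2_1_01 [simp]: "cartan E7 2 (Suc 0) = 0" by (simp add: cartan_def chain_adj_def doubleton_eq_iff)
lemma ct_E7_2_2_00 [simp]: "cartan E7 2 2 = 2" by (simp add: cartan_def chain_adj_def doubleton_eq_iff)
lemma ct_E7_2_3_00 [simp]: "cartan E7 2 3 = 0" by (simp add: cartan_def chain_adj_def doubleton_eq_iff)
lemma ct_E7_2_4_00 [simp]: "cartan E7 2 4 = - 1" by (simp add: cartan_def chain_adj_def doubleton_eq_iff)
lemma ct_E7_2_5_00 [simp]: "cartan E7 2 5 = 0" by (simp add: cartan_def chain_adj_def doubleton_eq_iff)
lemma ct_E7_2_6_00 [simp]: "cartan E7 2 6 = 0" by (simp add: cartan_def chain_adj_def doubleton_eq_iff)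
lemma ct_E7_2_7_00 [simp]: "cartan E7 2 7 = 0" by (simp add: cartan_def chain_adj_def doubleton_eq_iff)
lemma ct_E7_3_1_00 [simp]: "cartan E7 3 1 = - 1" by (simp add: cartan_def chain_adj_def doubleton_eq_iff)
lemma ct_E7_3_1_01 [simp]: "cartan E7 3 (Suc 0) = - 1" by (simp add: cartan_def chain_adj_def doubleton_eq_iff)
lemma ct_E7_3_2_00 [simp]: "cartan E7 3 2 = 0" by (simp add: cartan_def chain_adj_def doubleton_eq_iff)
lemma ct_E7_3_3_00 [simp]: "cartan E7 3 3 = 2" by (simp add: cartan_def chain_adj_def doubleton_eq_iff)
lemma ct_E7_3_4_00 [simp]: "cartan E7 3 4 = - 1" by (simp add: cartan_def chain_adj_def doubleton_eq_iff)
lemma ct_E7_3_5_00 [simp]: "cartan E7 3 5 = 0" by (simp add: cartan_def chain_adj_def doubleton_eq_iff)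
lemma ct_E7_3_6_00 [simp]: "cartan E7 3 6 = 0" by (simp add: cartan_def chain_adj_def doubleton_eq_iff)
lemma ct_E7_3_7_00 [simp]: "cartan E7 3 7 = 0" by (simp add: cartan_def chain_adj_def doubleton_eq_iff)
lemma ct_E7_4_1_00 [simp]: "cartan E7 4 1 = 0" by (simp add: cartan_def chain_adj_def doubleton_eq_iff)
lemma ct_E7_4_1_01 [simp]: "cartan E7 4 (Suc 0) = 0" by (simp add: cartan_def chain_adj_def doubleton_eq_iff)
lemma ct_E7_4_2_00 [simp]: "cartan E7 4 2 = - 1" by (simp add: cartan_def chain_adj_def doubleton_eq_iff)
lemma ct_E7_4_3_00 [simp]: "cartan E7 4 3 = - 1" by (simp add: cartan_def chain_adj_def doubleton_eq_iff)
lemma ct_E7_4_4_00 [simp]: "cartan E7 4 4 = 2" by (simp add: cartan_def chain_adj_def doubleton_eq_iff)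
lemma ct_E7_4_5_00 [simp]: "cartan E7 4 5 = - 1" by (simp add: cartan_def chain_adj_def doubleton_eq_iff)
lemma ct_E7_4_6_00 [simp]: "cartan E7 4 6 = 0" by (simp add: cartan_def chain_adj_def doubleton_eq_iff)
lemma ct_E7_4_7_00 [simp]: "cartan E7 4 7 = 0" by (simp add: cartan_def chain_adj_def doubleton_eq_iff)
lemma ct_E7_5_1_00 [simp]: "cartan E7 5 1 = 0" by (simp add: cartan_def chain_adj_def doubleton_eq_iff)
lemma ct_E7_5_1_01 [simp]: "cartan E7 5 (Suc 0) = 0" by (simp add: cartan_def chain_adj_def doubleton_eq_iff)
lemma ct_E7_5_2_00 [simp]: "cartan E7 5 2 = 0" by (simp add: cartan_def chain_adj_def doubleton_eq_iff)
lemma ct_E7_5_3_00 [simp]: "cartan E7 5 3 = 0" by (simp add: cartan_def chain_adj_def doubleton_eq_iff)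
lemma ct_E7_5_4_00 [simp]: "cartan E7 5 4 = - 1" by (simp add: cartan_def chain_adj_def doubleton_eq_iff)
lemma ct_E7_5_5_00 [simp]: "cartan E7 5 5 = 2" by (simp add: cartan_def chain_adj_def doubleton_eq_iff)
lemma ct_E7_5_6_00 [simp]: "cartan E7 5 6 = - 1" by (simp add: cartan_def chain_adj_def doubleton_eq_iff)
lemma ct_E7_5_7_00 [simp]: "cartan E7 5 7 = 0" by (simp add: cartan_def chain_adj_def doubleton_eq_iff)
lemma ct_E7_6_1_00 [simp]: "cartan E7 6 1 = 0" by (simp add: cartan_def chain_adj_def doubleton_eq_iff)
lemma ct_E7_6_1_01 [simp]: "cartan E7 6 (Suc 0) = 0" by (simp add: cartan_def chain_adj_def doubleton_eq_iff)
lemma ct_E7_6_2_00 [simp]: "cartan E7 6 2 = 0" by (simp add: cartan_def chain_adj_def doubleton_eq_iff)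
lemma ct_E7_6_3_00 [simp]: "cartan E7 6 3 = 0" by (simp add: cartan_def chain_adj_def doubleton_eq_iff)
lemma ct_E7_6_4_00 [simp]: "cartan E7 6 4 = 0" by (simp add: cartan_def chain_adj_def doubleton_eq_iff)
lemma ct_E7_6_5_00 [simp]: "cartan E7 6 5 = - 1" by (simp add: cartan_def chain_adj_def doubleton_eq_iff)
lemma ct_E7_6_6_00 [simp]: "cartan E7 6 6 = 2" by (simp add: cartan_def chain_adj_def doubleton_eq_iff)
lemma ct_E7_6_7_00 [simp]: "cartan E7 6 7 = - 1" by (simp add: cartan_def chain_adj_def doubleton_eq_iff)
lemma ct_E7_7_1_00 [simp]: "cartan E7 7 1 = 0" by (simp add: cartan_def chain_adj_def doubleton_eq_iff)
lemma ct_E7_7_1_01 [simp]: "cartan E7 7 (Suc 0) = 0" by (simp add: cartan_def chain_adj_def doubleton_eq_iff)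
lemma ct_E7_7_2_00 [simp]: "cartan E7 7 2 = 0" by (simp add: cartan_def chain_adj_def doubleton_eq_iff)
lemma ct_E7_7_3_00 [simp]: "cartan E7 7 3 = 0" by (simp add: cartan_def chain_adj_def doubleton_eq_iff)
lemma ct_E7_7_4_00 [simp]: "cartan E7 7 4 = 0" by (simp add: cartan_def chain_adj_def doubleton_eq_iff)
lemma ct_E7_7_5_00 [simp]: "cartan E7 7 5 = 0" by (simp add: cartan_def chain_adj_def doubleton_eq_iff)
lemma ct_E7_7_6_00 [simp]: "cartan E7 7 6 = - 1" by (simp add: cartan_def chain_adj_def doubleton_eq_iff)
lemma ct_E7_7_7_00 [simp]: "cartan E7 7 7 = 2" by (simp add: cartan_def chain_adj_def doubleton_eq_iff)
lemma ct_E8_1_1_00 [simp]: "cartan E8 1 1 = 2" by (simp add: cartan_def chain_adj_def doubleton_eq_iff)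
lemma ct_E8_1_1_01 [simp]: "cartan E8 1 (Suc 0) = 2" by (simp add: cartan_def chain_adj_def doubleton_eq_iff)
lemma ct_E8_1_1_10 [simp]: "cartan E8 (Suc 0) 1 = 2" by (simp add: cartan_def chain_adj_def doubleton_eq_iff)
lemma ct_E8_1_1_11 [simp]: "cartan E8 (Suc 0) (Suc 0) = 2" by (simp add: cartan_def chain_adj_def doubleton_eq_iff)
lemma ct_E8_1_2_00 [simp]: "cartan E8 1 2 = 0" by (simp add: cartan_def chain_adj_def doubleton_eq_iff)
lemma ct_E8_1_2_10 [simp]: "cartan E8 (Suc 0) 2 = 0" by (simp add: cartan_def chain_adj_def doubleton_eq_iff)
lemma ct_E8_1_3_00 [simp]: "cartan E8 1 3 = - 1" by (simp add: cartan_def chain_adj_def doubleton_eq_iff)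
lemma ct_E8_1_3_10 [simp]: "cartan E8 (Suc 0) 3 = - 1" by (simp add: cartan_def chain_adj_def doubleton_eq_iff)
lemma ct_E8_1_4_00 [simp]: "cartan E8 1 4 = 0" by (simp add: cartan_def chain_adj_def doubleton_eq_iff)
lemma ct_E8_1_4_10 [simp]: "cartan E8 (Suc 0) 4 = 0" by (simp add: cartan_def chain_adj_def doubleton_eq_iff)
lemma ct_E8_1_5_00 [simp]: "cartan E8 1 5 = 0" by (simp add: cartan_def chain_adj_def doubleton_eq_iff)
lemma ct_E8_1_5_10 [simp]: "cartan E8 (Suc 0) 5 = 0" by (simp add: cartan_def chain_adj_def doubleton_eq_iff)
lemma ct_E8_1_6_00 [simp]: "cartan E8 1 6 = 0" by (simp add: cartan_def chain_adj_def doubleton_eq_iff)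
lemma ct_E8_1_6_10 [simp]: "cartan E8 (Suc 0) 6 = 0" by (simp add: cartan_def chain_adj_def doubleton_eq_iff)
lemma ct_E8_1_7_00 [simp]: "cartan E8 1 7 = 0" by (simp add: cartan_def chain_adj_def doubleton_eq_iff)
lemma ct_E8_1_7_10 [simp]: "cartan E8 (Suc 0) 7 = 0" by (simp add: cartan_def chain_adj_def doubleton_eq_iff)
lemma ct_E8_1_8_00 [simp]: "cartan E8 1 8 = 0" by (simp add: cartan_def chain_adj_def doubleton_eq_iff)
lemma ct_E8_1_8_10 [simp]: "cartan E8 (Suc 0) 8 = 0" by (simp add: cartan_def chain_adj_def doubleton_eq_iff)
lemma ct_E8_2_1_00 [simp]: "cartan E8 2 1 = 0" by (simp add: cartan_def chain_adj_def doubleton_eq_iff)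
lemma ct_E8_2_1_01 [simp]: "cartan E8 2 (Suc 0) = 0" by (simp add: cartan_def chain_adj_def doubleton_eq_iff)
lemma ct_E8_2_2_00 [simp]: "cartan E8 2 2 = 2" by (simp add: cartan_def chain_adj_def doubleton_eq_iff)
lemma ct_E8_2_3_00 [simp]: "cartan E8 2 3 = 0" by (simp add: cartan_def chain_adj_def doubleton_eq_iff)
lemma ct_E8_2_4_00 [simp]: "cartan E8 2 4 = - 1" by (simp add: cartan_def chain_adj_def doubleton_eq_iff)
lemma ct_E8_2_5_00 [simp]: "cartan E8 2 5 = 0" by (simp add: cartan_def chain_adj_def doubleton_eq_iff)
lemma ct_E8_2_6_00 [simp]: "cartan E8 2 6 = 0" by (simp add: cartan_def chain_adj_def doubleton_eq_iff)
lemma ct_E8_2_7_00 [simp]: "cartan E8 2 7 = 0" by (simp add: cartan_def chain_adj_def doubleton_eq_iff)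
lemma ct_E8_2_8_00 [simp]: "cartan E8 2 8 = 0" by (simp add: cartan_def chain_adj_def doubleton_eq_iff)
lemma ct_E8_3_1_00 [simp]: "cartan E8 3 1 = - 1" by (simp add: cartan_def chain_adj_def doubleton_eq_iff)
lemma ct_E8_3_1_01 [simp]: "cartan E8 3 (Suc 0) = - 1" by (simp add: cartan_def chain_adj_def doubleton_eq_iff)
lemma ct_E8_3_2_00 [simp]: "cartan E8 3 2 = 0" by (simp add: cartan_def chain_adj_def doubleton_eq_iff)
lemma ct_E8_3_3_00 [simp]: "cartan E8 3 3 = 2" by (simp add: cartan_def chain_adj_def doubleton_eq_iff)
lemma ct_E8_3_4_00 [simp]: "cartan E8 3 4 = - 1" by (simp add: cartan_def chain_adj_def doubleton_eq_iff)
lemma ct_E8_3_5_00 [simp]: "cartan E8 3 5 = 0" by (simp add: cartan_def chain_adj_def doubleton_eq_iff)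
lemma ct_E8_3_6_00 [simp]: "cartan E8 3 6 = 0" by (simp add: cartan_def chain_adj_def doubleton_eq_iff)
lemma ct_E8_3_7_00 [simp]: "cartan E8 3 7 = 0" by (simp add: cartan_def chain_adj_def doubleton_eq_iff)
lemma ct_E8_3_8_00 [simp]: "cartan E8 3 8 = 0" by (simp add: cartan_def chain_adj_def doubleton_eq_iff)
lemma ct_E8_4_1_00 [simp]: "cartan E8 4 1 = 0" by (simp add: cartan_def chain_adj_def doubleton_eq_iff)
lemma ct_E8_4_1_01 [simp]: "cartan E8 4 (Suc 0) = 0" by (simp add: cartan_def chain_adj_def doubleton_eq_iff)
lemma ct_E8_4_2_00 [simp]: "cartan E8 4 2 = - 1" by (simp add: cartan_def chain_adj_def doubleton_eq_iff)
lemma ct_E8_4_3_00 [simp]: "cartan E8 4 3 = - 1" by (simp add: cartan_def chain_adj_def doubleton_eq_iff)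
lemma ct_E8_4_4_00 [simp]: "cartan E8 4 4 = 2" by (simp add: cartan_def chain_adj_def doubleton_eq_iff)
lemma ct_E8_4_5_00 [simp]: "cartan E8 4 5 = - 1" by (simp add: cartan_def chain_adj_def doubleton_eq_iff)
lemma ct_E8_4_6_00 [simp]: "cartan E8 4 6 = 0" by (simp add: cartan_def chain_adj_def doubleton_eq_iff)
lemma ct_E8_4_7_00 [simp]: "cartan E8 4 7 = 0" by (simp add: cartan_def chain_adj_def doubleton_eq_iff)
lemma ct_E8_4_8_00 [simp]: "cartan E8 4 8 = 0" by (simp add: cartan_def chain_adj_def doubleton_eq_iff)
lemma ct_E8_5_1_00 [simp]: "cartan E8 5 1 = 0" by (simp add: cartan_def chain_adj_def doubleton_eq_iff)
lemma ct_E8_5_1_01 [simp]: "cartan E8 5 (Suc 0) = 0" by (simp add: cartan_def chain_adj_def doubleton_eq_iff)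
lemma ct_E8_5_2_00 [simp]: "cartan E8 5 2 = 0" by (simp add: cartan_def chain_adj_def doubleton_eq_iff)
lemma ct_E8_5_3_00 [simp]: "cartan E8 5 3 = 0" by (simp add: cartan_def chain_adj_def doubleton_eq_iff)
lemma ct_E8_5_4_00 [simp]: "cartan E8 5 4 = - 1" by (simp add: cartan_def chain_adj_def doubleton_eq_iff)
lemma ct_E8_5_5_00 [simp]: "cartan E8 5 5 = 2" by (simp add: cartan_def chain_adj_def doubleton_eq_iff)
lemma ct_E8_5_6_00 [simp]: "cartan E8 5 6 = - 1" by (simp add: cartan_def chain_adj_def doubleton_eq_iff)
lemma ct_E8_5_7_00 [simp]: "cartan E8 5 7 = 0" by (simp add: cartan_def chain_adj_def doubleton_eq_iff)
lemma ct_E8_5_8_00 [simp]: "cartan E8 5 8 = 0" by (simp add: cartan_def chain_adj_def doubleton_eq_iff)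
lemma ct_E8_6_1_00 [simp]: "cartan E8 6 1 = 0" by (simp add: cartan_def chain_adj_def doubleton_eq_iff)
lemma ct_E8_6_1_01 [simp]: "cartan E8 6 (Suc 0) = 0" by (simp add: cartan_def chain_adj_def doubleton_eq_iff)
lemma ct_E8_6_2_00 [simp]: "cartan E8 6 2 = 0" by (simp add: cartan_def chain_adj_def doubleton_eq_iff)
lemma ct_E8_6_3_00 [simp]: "cartan E8 6 3 = 0" by (simp add: cartan_def chain_adj_def doubleton_eq_iff)
lemma ct_E8_6_4_00 [simp]: "cartan E8 6 4 = 0" by (simp add: cartan_def chain_adj_def doubleton_eq_iff)
lemma ct_E8_6_5_00 [simp]: "cartan E8 6 5 = - 1" by (simp add: cartan_def chain_adj_def doubleton_eq_iff)
lemma ct_E8_6_6_00 [simp]: "cartan E8 6 6 = 2" by (simp add: cartan_def chain_adj_def doubleton_eq_iff)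
lemma ct_E8_6_7_00 [simp]: "cartan E8 6 7 = - 1" by (simp add: cartan_def chain_adj_def doubleton_eq_iff)
lemma ct_E8_6_8_00 [simp]: "cartan E8 6 8 = 0" by (simp add: cartan_def chain_adj_def doubleton_eq_iff)
lemma ct_E8_7_1_00 [simp]: "cartan E8 7 1 = 0" by (simp add: cartan_def chain_adj_def doubleton_eq_iff)
lemma ct_E8_7_1_01 [simp]: "cartan E8 7 (Suc 0) = 0" by (simp add: cartan_def chain_adj_def doubleton_eq_iff)
lemma ct_E8_7_2_00 [simp]: "cartan E8 7 2 = 0" by (simp add: cartan_def chain_adj_def doubleton_eq_iff)
lemma ct_E8_7_3_00 [simp]: "cartan E8 7 3 = 0" by (simp add: cartan_def chain_adj_def doubleton_eq_iff)
lemma ct_E8_7_4_00 [simp]: "cartan E8 7 4 = 0" by (simp add: cartan_def chain_adj_def doubleton_eq_iff)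
lemma ct_E8_7_5_00 [simp]: "cartan E8 7 5 = 0" by (simp add: cartan_def chain_adj_def doubleton_eq_iff)
lemma ct_E8_7_6_00 [simp]: "cartan E8 7 6 = - 1" by (simp add: cartan_def chain_adj_def doubleton_eq_iff)
lemma ct_E8_7_7_00 [simp]: "cartan E8 7 7 = 2" by (simp add: cartan_def chain_adj_def doubleton_eq_iff)
lemma ct_E8_7_8_00 [simp]: "cartan E8 7 8 = - 1" by (simp add: cartan_def chain_adj_def doubleton_eq_iff)
lemma ct_E8_8_1_00 [simp]: "cartan E8 8 1 = 0" by (simp add: cartan_def chain_adj_def doubleton_eq_iff)
lemma ct_E8_8_1_01 [simp]: "cartan E8 8 (Suc 0) = 0" by (simp add: cartan_def chain_adj_def doubleton_eq_iff)
lemma ct_E8_8_2_00 [simp]: "cartan E8 8 2 = 0" by (simp add: cartan_def chain_adj_def doubleton_eq_iff)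
lemma ct_E8_8_3_00 [simp]: "cartan E8 8 3 = 0" by (simp add: cartan_def chain_adj_def doubleton_eq_iff)
lemma ct_E8_8_4_00 [simp]: "cartan E8 8 4 = 0" by (simp add: cartan_def chain_adj_def doubleton_eq_iff)
lemma ct_E8_8_5_00 [simp]: "cartan E8 8 5 = 0" by (simp add: cartan_def chain_adj_def doubleton_eq_iff)
lemma ct_E8_8_6_00 [simp]: "cartan E8 8 6 = 0" by (simp add: cartan_def chain_adj_def doubleton_eq_iff)
lemma ct_E8_8_7_00 [simp]: "cartan E8 8 7 = - 1" by (simp add: cartan_def chain_adj_def doubleton_eq_iff)
lemma ct_E8_8_8_00 [simp]: "cartan E8 8 8 = 2" by (simp add: cartan_def chain_adj_def doubleton_eq_iff)
lemma ivl_2: "{1..2::nat} = {1,2}" by auto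
lemma ivl_4: "{1..4::nat} = {1,2,3,4}" by auto
lemma ivl_6: "{1..6::nat} = {1,2,3,4,5,6}" by auto
lemma ivl_7: "{1..7::nat} = {1,2,3,4,5,6,7}" by auto
lemma ivl_8: "{1..8::nat} = {1,2,3,4,5,6,7,8}" by auto

lemma G2_w: "\<forall>i\<in>{1..rank G2}. (\<lambda>j. 2 * om i j) \<in> root_lattice G2"
proof
  fix i assume "i \<in> {1..rank G2}"
  then have "i \<in> {1,2}" by auto
  then show "(\<lambda>j. 2 * om i j) \<in> root_lattice G2"
  proof (elim insertE emptyE)
    assume "i = 1" then show ?thesis
      apply (intro RL_intro[where c="\<lambda>k. [4,2] ! (k - 1)"])
      unfolding rank.simps ivl_2 by (simp_all add: weights_def om_def)
  next
    assume "i = 2" then show ?thesis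
      apply (intro RL_intro[where c="\<lambda>k. [6,4] ! (k - 1)"])
      unfolding rank.simps ivl_2 by (simp_all add: weights_def om_def)
  qed
qed

lemma F4_w: "\<forall>i\<in>{1..rank F4}. (\<lambda>j. 2 * om i j) \<in> root_lattice F4"
proof
  fix i assume "i \<in> {1..rank F4}"
  then have "i \<in> {1,2,3,4}" by auto
  then show "(\<lambda>j. 2 * om i j) \<in> root_lattice F4"
  proof (elim insertE emptyE)
    assume "i = 1" then show ?thesis
      apply (intro RL_intro[where c="\<lambda>k. [4,6,8,4] ! (k - 1)"])
      unfolding rank.simps ivl_4 by (simp_all add: weights_def om_def)
  next
    assume "i = 2" then show ?thesis
      apply (intro RL_intro[where c="\<lambda>k. [6,12,16,8] ! (k - 1)"])
      unfolding rank.simps ivl_4 by (simp_all add: weights_def om_def)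
  next
    assume "i = 3" then show ?thesis
      apply (intro RL_intro[where c="\<lambda>k. [4,8,12,6] ! (k - 1)"])
      unfolding rank.simps ivl_4 by (simp_all add: weights_def om_def)
  next
    assume "i = 4" then show ?thesis
      apply (intro RL_intro[where c="\<lambda>k. [2,4,6,4] ! (k - 1)"])
      unfolding rank.simps ivl_4 by (simp_all add: weights_def om_def)
  qed
qed

lemma E7_w: "\<forall>i\<in>{1..rank E7}. (\<lambda>j. 2 * om i j) \<in> root_lattice E7"
proof
  fix i assume "i \<in> {1..rank E7}"
  then have "i \<in> {1,2,3,4,5,6,7}" by auto
  then show "(\<lambda>j. 2 * om i j) \<in> root_lattice E7"
  proof (elim insertE emptyE)
    assume "i = 1" then show ?thesis
      apply (intro RL_intro[where c="\<lambda>k. [4,4,6,8,6,4,2] ! (k - 1)"])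
      unfolding rank.simps ivl_7 by (simp_all add: weights_def om_def)
  next
    assume "i = 2" then show ?thesis
      apply (intro RL_intro[where c="\<lambda>k. [4,7,8,12,9,6,3] ! (k - 1)"])
      unfolding rank.simps ivl_7 by (simp_all add: weights_def om_def)
  next
    assume "i = 3" then show ?thesis
      apply (intro RL_intro[where c="\<lambda>k. [6,8,12,16,12,8,4] ! (k - 1)"])
      unfolding rank.simps ivl_7 by (simp_all add: weights_def om_def)
  next
    assume "i = 4" then show ?thesis
      apply (intro RL_intro[where c="\<lambda>k. [8,12,16,24,18,12,6] ! (k - 1)"])
      unfolding rank.simps ivl_7 by (simp_all add: weights_def om_def)
  next
    assume "i = 5" then show ?thesis
      apply (intro RL_intro[where c="\<lambda>k. [6,9,12,18,15,10,5] ! (k - 1)"])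
      unfolding rank.simps ivl_7 by (simp_all add: weights_def om_def)
  next
    assume "i = 6" then show ?thesis
      apply (intro RL_intro[where c="\<lambda>k. [4,6,8,12,10,8,4] ! (k - 1)"])
      unfolding rank.simps ivl_7 by (simp_all add: weights_def om_def)
  next
    assume "i = 7" then show ?thesis
      apply (intro RL_intro[where c="\<lambda>k. [2,3,4,6,5,4,3] ! (k - 1)"])
      unfolding rank.simps ivl_7 by (simp_all add: weights_def om_def)
  qed
qed

lemma E8_w: "\<forall>i\<in>{1..rank E8}. (\<lambda>j. 2 * om i j) \<in> root_lattice E8"
proof
  fix i assume "i \<in> {1..rank E8}"
  then have "i \<in> {1,2,3,4,5,6,7,8}" by auto
  then show "(\<lambda>j. 2 * om i j) \<in> root_lattice E8"
  proof (elim insertE emptyE)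
    assume "i = 1" then show ?thesis
      apply (intro RL_intro[where c="\<lambda>k. [8,10,14,20,16,12,8,4] ! (k - 1)"])
      unfolding rank.simps ivl_8 by (simp_all add: weights_def om_def)
  next
    assume "i = 2" then show ?thesis
      apply (intro RL_intro[where c="\<lambda>k. [10,16,20,30,24,18,12,6] ! (k - 1)"])
      unfolding rank.simps ivl_8 by (simp_all add: weights_def om_def)
  next
    assume "i = 3" then show ?thesis
      apply (intro RL_intro[where c="\<lambda>k. [14,20,28,40,32,24,16,8] ! (k - 1)"])
      unfolding rank.simps ivl_8 by (simp_all add: weights_def om_def)
  next
    assume "i = 4" then show ?thesis
      apply (intro RL_intro[where c="\<lambda>k. [20,30,40,60,48,36,24,12] ! (k - 1)"])
      unfolding rank.simps ivl_8 by (simp_all add: weights_def om_def)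
  next
    assume "i = 5" then show ?thesis
      apply (intro RL_intro[where c="\<lambda>k. [16,24,32,48,40,30,20,10] ! (k - 1)"])
      unfolding rank.simps ivl_8 by (simp_all add: weights_def om_def)
  next
    assume "i = 6" then show ?thesis
      apply (intro RL_intro[where c="\<lambda>k. [12,18,24,36,30,24,16,8] ! (k - 1)"])
      unfolding rank.simps ivl_8 by (simp_all add: weights_def om_def)
  next
    assume "i = 7" then show ?thesis
      apply (intro RL_intro[where c="\<lambda>k. [8,12,16,24,20,16,12,6] ! (k - 1)"])
      unfolding rank.simps ivl_8 by (simp_all add: weights_def om_def)
  next
    assume "i = 8" then show ?thesis
      apply (intro RL_intro[where c="\<lambda>k. [4,6,8,12,10,8,6,4] ! (k - 1)"])
      unfolding rank.simps ivl_8 by (simp_all add: weights_def om_def)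
  qed
qed

lemma sum_delta1: "(\<Sum>i\<in>{1..n::nat}. if i = k then x else 0) = (if 1 \<le> k \<and> k \<le> n then x else (0::int))"
  by (simp add: sum.delta')

lemma colA:
  assumes j: "j \<in> {1..n}"
  shows "(\<Sum>i\<in>{1..n}. c i * cartan (A n) i j)
       = 2 * c j - (if 2 \<le> j then c (j - 1) else 0) - (if j < n then c (j + 1) else 0)"
proof -
  have "(\<Sum>i\<in>{1..n}. c i * cartan (A n) i j)
     = (\<Sum>i\<in>{1..n}. (if i = j then 2 * c j else 0) - (if i = j - 1 then (if 2 \<le> j then c (j - 1) else 0) else 0)
            - (if i = j + 1 then c (j + 1) else 0))"
    by (rule sum.cong) (auto simp: cartan_def chain_adj_def)
  also have "\<dots> = 2 * c j - (if 2 \<le> j then c (j - 1) else 0) - (if j < n then c (j + 1) else 0)"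
    using j by (auto simp: sum_subtractf sum_delta1)
  finally show ?thesis .
qed


lemma cartanB_pt: "cartan (B n) i j = (if i = j then 2 else 0) - (if i + 1 = j then (if j = n then 2 else 1) else 0) - (if i = j + 1 then 1 else 0)"
  by (auto simp: cartan_def chain_adj_def)
lemma cartanC_pt: "cartan (C n) i j = (if i = j then 2 else 0) - (if i + 1 = j then 1 else 0) - (if i = j + 1 then (if i = n then 2 else 1) else 0)"
  by (auto simp: cartan_def chain_adj_def)
lemma cartanA_pt: "cartan (A n) i j = (if i = j then 2 else 0) - (if i + 1 = j then 1 else 0) - (if i = j + 1 then 1 else 0)"
  by (auto simp: cartan_def chain_adj_def)

lemma cartanD_pt:
  assumes "n \<ge> 4"
  shows "cartan (D n) i j = (if i = j then 2 else 0) - (if i + 1 = j \<and> j \<le> n - 1 then 1 else 0)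
     - (if i = j + 1 \<and> i \<le> n - 1 then 1 else 0) - (if i = n \<and> j = n - 2 then 1 else 0)
     - (if i = n - 2 \<and> j = n then 1 else 0)"
  using assms by (auto simp: cartan_def chain_adj_def doubleton_eq_iff)

lemma sum_pred: "(\<Sum>i\<in>{1..n::nat}. if i + 1 = j then f i else 0) = (if 2 \<le> j \<and> j \<le> n + 1 then f (j - 1) else (0::int))"
proof -
  have "(\<Sum>i\<in>{1..n::nat}. if i + 1 = j then f i else 0) = (\<Sum>i\<in>{1..n::nat}. if i = j - 1 then (if j \<ge> 1 then f (j - 1) else 0) else 0)"
    by (rule sum.cong) auto
  then show ?thesis by (auto simp: sum_delta1)
qed

lemma sum_succ: "(\<Sum>i\<in>{1..n::nat}. if i = j + 1 then f i else 0) = (if j + 1 \<le> n then f (j + 1) else (0::int))"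
proof -
  have "(\<Sum>i\<in>{1..n::nat}. if i = j + 1 then f i else 0) = (\<Sum>i\<in>{1..n::nat}. if i = j + 1 then f (j + 1) else 0)"
    by (rule sum.cong) auto
  then show ?thesis by (auto simp: sum_delta1)
qed

lemma sum_at: "(\<Sum>i\<in>{1..n::nat}. if i = k then f i else 0) = (if 1 \<le> k \<and> k \<le> n then f k else (0::int))"
  by (simp add: sum.delta')

lemma colB:
  assumes j: "j \<in> {1..n}"
  shows "(\<Sum>i\<in>{1..n}. c i * cartan (B n) i j)
       = 2 * c j - (if 2 \<le> j then (if j = n then 2 else 1) * c (j - 1) else 0) - (if j < n then c (j + 1) else 0)"
proof -
  have "(\<Sum>i\<in>{1..n}. c i * cartan (B n) i j)
     = (\<Sum>i\<in>{1..n}. (if i = j then 2 * c i else 0) - (if i + 1 = j then (if j = n then 2 else 1) * c i else 0)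
            - (if i = j + 1 then c i else 0))"
    by (rule sum.cong) (simp_all add: cartanB_pt algebra_simps)
  also have "\<dots> = 2 * c j - (if 2 \<le> j then (if j = n then 2 else 1) * c (j - 1) else 0) - (if j < n then c (j + 1) else 0)"
    using j by (simp only: sum_subtractf sum_at sum_pred sum_succ) auto
  finally show ?thesis .
qed

lemma colC:
  assumes j: "j \<in> {1..n}"
  shows "(\<Sum>i\<in>{1..n}. c i * cartan (C n) i j)
       = 2 * c j - (if 2 \<le> j then c (j - 1) else 0) - (if j < n then (if j + 1 = n then 2 else 1) * c (j + 1) else 0)"
proof -
  have "(\<Sum>i\<in>{1..n}. c i * cartan (C n) i j)
     = (\<Sum>i\<in>{1..n}. (if i = j then 2 * c i else 0) - (if i + 1 = j then c i else 0)
            - (if i = j + 1 then (if i = n then 2 else 1) * c i else 0))"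
    by (rule sum.cong) (simp_all add: cartanC_pt algebra_simps)
  also have "\<dots> = 2 * c j - (if 2 \<le> j then c (j - 1) else 0) - (if j < n then (if j + 1 = n then 2 else 1) * c (j + 1) else 0)"
    using j by (simp only: sum_subtractf sum_at sum_pred sum_succ) auto
  finally show ?thesis .
qed

lemma colD:
  assumes j: "j \<in> {1..n}" and n: "n \<ge> 4"
  shows "(\<Sum>i\<in>{1..n}. c i * cartan (D n) i j)
       = 2 * c j - (if 2 \<le> j \<and> j \<le> n - 1 then c (j - 1) else 0) - (if j + 1 \<le> n - 1 then c (j + 1) else 0)
         - (if j = n - 2 then c n else 0) - (if j = n then c (n - 2) else 0)"
proof -
  have "(\<Sum>i\<in>{1..n}. c i * cartan (D n) i j)
     = (\<Sum>i\<in>{1..n}. (if i = j then 2 * c i else 0) - (if i + 1 = j then (if j \<le> n - 1 then c i else 0) else 0)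
            - (if i = j + 1 then (if j + 1 \<le> n - 1 then c i else 0) else 0)
            - (if i = n then (if j = n - 2 then c i else 0) else 0)
            - (if i = n - 2 then (if j = n then c i else 0) else 0))"
    using n j by (intro sum.cong) (auto simp: cartanD_pt[OF n] algebra_simps)
  also have "\<dots> = 2 * c j - (if 2 \<le> j \<and> j \<le> n - 1 then c (j - 1) else 0) - (if j + 1 \<le> n - 1 then c (j + 1) else 0)
         - (if j = n - 2 then c n else 0) - (if j = n then c (n - 2) else 0)"
    using j n by (simp only: sum_subtractf sum_at sum_pred sum_succ) auto
  finally show ?thesis .
qed

lemma symA: "cartan (A n) i j = cartan (A n) j i"
  by (auto simp: cartanA_pt)

lemma symD: "cartan (D n) i j = cartan (D n) j i"
proof -
  have "dyn_adj (D n) i j = dyn_adj (D n) j i" by (auto simp: chain_adj_def insert_commute)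
  then show ?thesis unfolding cartan_def by simp
qed

lemma B_w: assumes n: "n \<ge> 2" shows "\<forall>i\<in>{1..rank (B n)}. (\<lambda>j. 2 * om i j) \<in> root_lattice (B n)"
proof
  fix i assume i: "i \<in> {1..rank (B n)}"
  show "(\<lambda>j. 2 * om i j) \<in> root_lattice (B n)"
  proof (rule RL_intro[where c="\<lambda>k. if i = n then int k else 2 * int (min i k)"])
    show "(\<lambda>j. 2 * om i j) \<in> weights (B n)" using i by (auto simp: weights_def om_def)
    show "\<forall>j\<in>{1..rank (B n)}. 2 * om i j = (\<Sum>ia\<in>{1..rank (B n)}. (if i = n then int ia else 2 * int (min i ia)) * cartan (B n) ia j)"
    proof
      fix j assume j: "j \<in> {1..rank (B n)}"
      show "2 * om i j = (\<Sum>ia\<in>{1..rank (B n)}. (if i = n then int ia else 2 * int (min i ia)) * cartan (B n) ia j)"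
        unfolding rank.simps using i j n by (subst colB) (auto simp: om_def min_def)
    qed
  qed
qed

lemma C_w: assumes n: "n \<ge> 2" shows "\<forall>i\<in>{1..rank (C n)}. (\<lambda>j. 2 * om i j) \<in> root_lattice (C n)"
proof
  fix i assume i: "i \<in> {1..rank (C n)}"
  show "(\<lambda>j. 2 * om i j) \<in> root_lattice (C n)"
  proof (rule RL_intro[where c="\<lambda>k. if k < n then 2 * int (min i k) else int i"])
    show "(\<lambda>j. 2 * om i j) \<in> weights (C n)" using i by (auto simp: weights_def om_def)
    show "\<forall>j\<in>{1..rank (C n)}. 2 * om i j = (\<Sum>ia\<in>{1..rank (C n)}. (if ia < n then 2 * int (min i ia) else int i) * cartan (C n) ia j)"
    proof
      fix j assume j: "j \<in> {1..rank (C n)}"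
      show "2 * om i j = (\<Sum>ia\<in>{1..rank (C n)}. (if ia < n then 2 * int (min i ia) else int i) * cartan (C n) ia j)"
        unfolding rank.simps using i j n by (subst colC) (auto simp: om_def min_def)
    qed
  qed
qed

lemma colD':
  assumes j: "j \<in> {1..n}" and n: "n \<ge> 4" and c0: "c 0 = 0"
  shows "(\<Sum>i\<in>{1..n}. c i * cartan (D n) i j)
       = 2 * c j - (if j \<le> n - 1 then c (j - 1) else 0) - (if j + 1 \<le> n - 1 then c (j + 1) else 0)
         - (if j = n - 2 then c n else 0) - (if j = n then c (n - 2) else 0)"
  using colD[OF j n, of c] j c0 by (cases "j = 1") auto

lemma mh1: "1 \<le> i \<Longrightarrow> 1 \<le> j \<Longrightarrow> 4 * int (min i j) - 2 * int (min i (j - 1)) - 2 * int (min i (j + 1)) = 2 * om i j"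
  by (auto simp: min_def om_def)

lemma D_low: assumes "n \<ge> 4" "i \<in> {1..n-2}"
  shows "(\<lambda>j. 2 * om i j) \<in> root_lattice (D n)"
proof (rule RL_intro[where c="\<lambda>k. if k \<le> n - 2 then 2 * int (min i k) else int i"])
  show "(\<lambda>j. 2 * om i j) \<in> weights (D n)" using assms by (auto simp: weights_def om_def)
  show "\<forall>j\<in>{1..rank (D n)}. 2 * om i j = (\<Sum>ia\<in>{1..rank (D n)}. (if ia \<le> n - 2 then 2 * int (min i ia) else int i) * cartan (D n) ia j)"
  proof
    fix j assume j: "j \<in> {1..rank (D n)}"
    have n4: "n \<ge> 4" using assms by simp
    have j': "j \<in> {1..n}" using j by simp
    have e: "(\<Sum>ia\<in>{1..rank (D n)}. (if ia \<le> n - 2 then 2 * int (min i ia) else int i) * cartan (D n) ia j)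
      = 2 * (if j \<le> n - 2 then 2 * int (min i j) else int i) - (if j \<le> n - 1 then (if j - 1 \<le> n - 2 then 2 * int (min i (j - 1)) else int i) else 0)
         - (if j + 1 \<le> n - 1 then (if j + 1 \<le> n - 2 then 2 * int (min i (j + 1)) else int i) else 0)
         - (if j = n - 2 then int i else 0) - (if j = n then 2 * int (min i (n - 2)) else 0)"
      unfolding rank.simps using n4 by (subst colD'[OF j' n4]) auto
    have "j \<le> n - 3 \<or> j = n - 2 \<or> j = n - 1 \<or> j = n" using j' by auto
    then show "2 * om i j = (\<Sum>ia\<in>{1..rank (D n)}. (if ia \<le> n - 2 then 2 * int (min i ia) else int i) * cartan (D n) ia j)"
    proof (elim disjE)
      assume a: "j \<le> n - 3"
      then have "j + 1 \<le> n - 2" "j - 1 \<le> n - 2" "j \<le> n - 2" "j \<noteq> n - 2" "j \<noteq> n" "j \<le> n - 1" "j + 1 \<le> n - 1" using a assms j' by auto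
      then show ?thesis unfolding e using assms j' mh1[of i j] by simp
    next
      assume a: "j = n - 2" 
      then have "j - 1 \<le> n - 2" "j \<le> n - 2" "j \<noteq> n" "j \<le> n - 1" "j + 1 \<le> n - 1" "\<not> j + 1 \<le> n - 2" using a assms j' by auto
      then show ?thesis unfolding e using assms j' a by (simp add: om_def min_def; presburger)
    next
      assume a: "j = n - 1"
      then have "j - 1 \<le> n - 2" "\<not> j \<le> n - 2" "j \<noteq> n" "j \<le> n - 1" "\<not> j + 1 \<le> n - 1" "j \<noteq> n - 2" using a assms j' by auto
      then show ?thesis unfolding e using assms j' a by (simp add: om_def min_def; presburger)
    next
      assume a: "j = n"
      then have "\<not> j \<le> n - 2" "\<not> j \<le> n - 1" "\<not> j + 1 \<le> n - 1" "j \<noteq> n - 2" using a assms j' by auto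
      then show ?thesis unfolding e using assms j' a by (simp add: om_def min_def; presburger)
    qed
  qed
qed
lemma D_even1: assumes "n = 2*m+2" "m \<ge> 1"
  shows "(\<lambda>j. 2 * om (n - 1) j) \<in> root_lattice (D n)"
proof (rule RL_intro[where c="\<lambda>k. if k \<le> n - 2 then int k else if k = n - 1 then int m + 1 else int m"])
  have n4: "n \<ge> 4" using assms by simp
  show "(\<lambda>j. 2 * om (n - 1) j) \<in> weights (D n)" using n4 by (auto simp: weights_def om_def)
  show "\<forall>j\<in>{1..rank (D n)}. 2 * om (n - 1) j = (\<Sum>ia\<in>{1..rank (D n)}. (\<lambda>k. if k \<le> n - 2 then int k else if k = n - 1 then int m + 1 else int m) ia * cartan (D n) ia j)"
  proof
    fix j assume j: "j \<in> {1..rank (D n)}"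
    have j': "j \<in> {1..n}" using j by simp
    have e: "(\<Sum>ia\<in>{1..rank (D n)}. (\<lambda>k. if k \<le> n - 2 then int k else if k = n - 1 then int m + 1 else int m) ia * cartan (D n) ia j)
      = 2 * (if j \<le> n - 2 then int j else if j = n - 1 then int m + 1 else int m) - (if j \<le> n - 1 then (if (j - 1) \<le> n - 2 then int (j - 1) else if (j - 1) = n - 1 then int m + 1 else int m) else 0)
         - (if j + 1 \<le> n - 1 then (if (j + 1) \<le> n - 2 then int (j + 1) else if (j + 1) = n - 1 then int m + 1 else int m) else 0)
         - (if j = n - 2 then (if n \<le> n - 2 then int n else if n = n - 1 then int m + 1 else int m) else 0) - (if j = n then (if (n - 2) \<le> n - 2 then int (n - 2) else if (n - 2) = n - 1 then int m + 1 else int m) else 0)"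
      unfolding rank.simps using n4 by (subst colD'[OF j' n4]) auto
    have "j \<le> n - 3 \<or> j = n - 2 \<or> j = n - 1 \<or> j = n" using j' by auto
    then show "2 * om (n - 1) j = (\<Sum>ia\<in>{1..rank (D n)}. (\<lambda>k. if k \<le> n - 2 then int k else if k = n - 1 then int m + 1 else int m) ia * cartan (D n) ia j)"
    proof (elim disjE)
      assume a: "j \<le> n - 3"
      then have "j + 1 \<le> n - 2" "j - 1 \<le> n - 2" "j \<le> n - 2" "j \<noteq> n - 2" "j \<noteq> n" "j \<le> n - 1" "j + 1 \<le> n - 1" "j \<noteq> n - 1" using a n4 j' by auto
      then show ?thesis unfolding e using assms j' by (simp add: om_def; presburger)
    next
      assume a: "j = n - 2" 
      then have "j - 1 \<le> n - 2" "j \<le> n - 2" "j \<noteq> n" "j \<le> n - 1" "j + 1 \<le> n - 1" "\<not> j + 1 \<le> n - 2" "j + 1 = n - 1" "\<not> n \<le> n - 2" "n \<noteq> n - 1" "j \<noteq> n - 1" using a n4 j' by auto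
      then show ?thesis unfolding e using assms j' a by (simp add: om_def; presburger)
    next
      assume a: "j = n - 1"
      then have "j - 1 \<le> n - 2" "\<not> j \<le> n - 2" "j \<noteq> n" "j \<le> n - 1" "\<not> j + 1 \<le> n - 1" "j \<noteq> n - 2" using a n4 j' by auto
      then show ?thesis unfolding e using assms j' a by (simp add: om_def; presburger)
    next
      assume a: "j = n"
      then have "\<not> j \<le> n - 2" "\<not> j \<le> n - 1" "\<not> j + 1 \<le> n - 1" "j \<noteq> n - 2" "j \<noteq> n - 1" using a n4 j' by auto
      then show ?thesis unfolding e using assms j' a by (simp add: om_def; presburger)
    qed
  qed
qed

lemma D_even2: assumes "n = 2*m+2" "m \<ge> 1"
  shows "(\<lambda>j. 2 * om n j) \<in> root_lattice (D n)"
proof (rule RL_intro[where c="\<lambda>k. if k \<le> n - 2 then int k else if k = n - 1 then int m else int m + 1"])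
  have n4: "n \<ge> 4" using assms by simp
  show "(\<lambda>j. 2 * om n j) \<in> weights (D n)" using n4 by (auto simp: weights_def om_def)
  show "\<forall>j\<in>{1..rank (D n)}. 2 * om n j = (\<Sum>ia\<in>{1..rank (D n)}. (\<lambda>k. if k \<le> n - 2 then int k else if k = n - 1 then int m else int m + 1) ia * cartan (D n) ia j)"
  proof
    fix j assume j: "j \<in> {1..rank (D n)}"
    have j': "j \<in> {1..n}" using j by simp
    have e: "(\<Sum>ia\<in>{1..rank (D n)}. (\<lambda>k. if k \<le> n - 2 then int k else if k = n - 1 then int m else int m + 1) ia * cartan (D n) ia j)
      = 2 * (if j \<le> n - 2 then int j else if j = n - 1 then int m else int m + 1) - (if j \<le> n - 1 then (if (j - 1) \<le> n - 2 then int (j - 1) else if (j - 1) = n - 1 then int m else int m + 1) else 0)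
         - (if j + 1 \<le> n - 1 then (if (j + 1) \<le> n - 2 then int (j + 1) else if (j + 1) = n - 1 then int m else int m + 1) else 0)
         - (if j = n - 2 then (if n \<le> n - 2 then int n else if n = n - 1 then int m else int m + 1) else 0) - (if j = n then (if (n - 2) \<le> n - 2 then int (n - 2) else if (n - 2) = n - 1 then int m else int m + 1) else 0)"
      unfolding rank.simps using n4 by (subst colD'[OF j' n4]) auto
    have "j \<le> n - 3 \<or> j = n - 2 \<or> j = n - 1 \<or> j = n" using j' by auto
    then show "2 * om n j = (\<Sum>ia\<in>{1..rank (D n)}. (\<lambda>k. if k \<le> n - 2 then int k else if k = n - 1 then int m else int m + 1) ia * cartan (D n) ia j)"
    proof (elim disjE)
      assume a: "j \<le> n - 3"
      then have "j + 1 \<le> n - 2" "j - 1 \<le> n - 2" "j \<le> n - 2" "j \<noteq> n - 2" "j \<noteq> n" "j \<le> n - 1" "j + 1 \<le> n - 1" "j \<noteq> n - 1" using a n4 j' by auto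
      then show ?thesis unfolding e using assms j' by (simp add: om_def; presburger)
    next
      assume a: "j = n - 2" 
      then have "j - 1 \<le> n - 2" "j \<le> n - 2" "j \<noteq> n" "j \<le> n - 1" "j + 1 \<le> n - 1" "\<not> j + 1 \<le> n - 2" "j + 1 = n - 1" "\<not> n \<le> n - 2" "n \<noteq> n - 1" "j \<noteq> n - 1" using a n4 j' by auto
      then show ?thesis unfolding e using assms j' a by (simp add: om_def; presburger)
    next
      assume a: "j = n - 1"
      then have "j - 1 \<le> n - 2" "\<not> j \<le> n - 2" "j \<noteq> n" "j \<le> n - 1" "\<not> j + 1 \<le> n - 1" "j \<noteq> n - 2" using a n4 j' by auto
      then show ?thesis unfolding e using assms j' a by (simp add: om_def; presburger)
    next
      assume a: "j = n"
      then have "\<not> j \<le> n - 2" "\<not> j \<le> n - 1" "\<not> j + 1 \<le> n - 1" "j \<noteq> n - 2" "j \<noteq> n - 1" using a n4 j' by auto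
      then show ?thesis unfolding e using assms j' a by (simp add: om_def; presburger)
    qed
  qed
qed

lemma D_pair: assumes "n \<ge> 4"
  shows "(\<lambda>j. 2 * (om (n - 1) j + om n j)) \<in> root_lattice (D n)"
proof (rule RL_intro[where c="\<lambda>k. if k \<le> n - 2 then 2 * int k else if k = n - 1 then int n - 1 else int n - 1"])
  have n4: "n \<ge> 4" using assms by simp
  show "(\<lambda>j. 2 * (om (n - 1) j + om n j)) \<in> weights (D n)" using n4 by (auto simp: weights_def om_def)
  show "\<forall>j\<in>{1..rank (D n)}. 2 * (om (n - 1) j + om n j) = (\<Sum>ia\<in>{1..rank (D n)}. (\<lambda>k. if k \<le> n - 2 then 2 * int k else if k = n - 1 then int n - 1 else int n - 1) ia * cartan (D n) ia j)"
  proof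
    fix j assume j: "j \<in> {1..rank (D n)}"
    have j': "j \<in> {1..n}" using j by simp
    have e: "(\<Sum>ia\<in>{1..rank (D n)}. (\<lambda>k. if k \<le> n - 2 then 2 * int k else if k = n - 1 then int n - 1 else int n - 1) ia * cartan (D n) ia j)
      = 2 * (if j \<le> n - 2 then 2 * int j else if j = n - 1 then int n - 1 else int n - 1) - (if j \<le> n - 1 then (if (j - 1) \<le> n - 2 then 2 * int (j - 1) else if (j - 1) = n - 1 then int n - 1 else int n - 1) else 0)
         - (if j + 1 \<le> n - 1 then (if (j + 1) \<le> n - 2 then 2 * int (j + 1) else if (j + 1) = n - 1 then int n - 1 else int n - 1) else 0)
         - (if j = n - 2 then (if n \<le> n - 2 then 2 * int n else if n = n - 1 then int n - 1 else int n - 1) else 0) - (if j = n then (if (n - 2) \<le> n - 2 then 2 * int (n - 2) else if (n - 2) = n - 1 then int n - 1 else int n - 1) else 0)"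
      unfolding rank.simps using n4 by (subst colD'[OF j' n4]) auto
    have "j \<le> n - 3 \<or> j = n - 2 \<or> j = n - 1 \<or> j = n" using j' by auto
    then show "2 * (om (n - 1) j + om n j) = (\<Sum>ia\<in>{1..rank (D n)}. (\<lambda>k. if k \<le> n - 2 then 2 * int k else if k = n - 1 then int n - 1 else int n - 1) ia * cartan (D n) ia j)"
    proof (elim disjE)
      assume a: "j \<le> n - 3"
      then have "j + 1 \<le> n - 2" "j - 1 \<le> n - 2" "j \<le> n - 2" "j \<noteq> n - 2" "j \<noteq> n" "j \<le> n - 1" "j + 1 \<le> n - 1" "j \<noteq> n - 1" using a n4 j' by auto
      then show ?thesis unfolding e using assms j' by (simp add: om_def; presburger)
    next
      assume a: "j = n - 2" 
      then have "j - 1 \<le> n - 2" "j \<le> n - 2" "j \<noteq> n" "j \<le> n - 1" "j + 1 \<le> n - 1" "\<not> j + 1 \<le> n - 2" "j + 1 = n - 1" "\<not> n \<le> n - 2" "n \<noteq> n - 1" "j \<noteq> n - 1" using a n4 j' by auto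
      then show ?thesis unfolding e using assms j' a by (simp add: om_def; presburger)
    next
      assume a: "j = n - 1"
      then have "j - 1 \<le> n - 2" "\<not> j \<le> n - 2" "j \<noteq> n" "j \<le> n - 1" "\<not> j + 1 \<le> n - 1" "j \<noteq> n - 2" using a n4 j' by auto
      then show ?thesis unfolding e using assms j' a by (simp add: om_def; presburger)
    next
      assume a: "j = n"
      then have "\<not> j \<le> n - 2" "\<not> j \<le> n - 1" "\<not> j + 1 \<le> n - 1" "j \<noteq> n - 2" "j \<noteq> n - 1" using a n4 j' by auto
      then show ?thesis unfolding e using assms j' a by (simp add: om_def; presburger)
    qed
  qed
qed

lemma D_quad: assumes "n \<ge> 4"
  shows "(\<lambda>j. 4 * om (n - 1) j) \<in> root_lattice (D n)"
proof (rule RL_intro[where c="\<lambda>k. if k \<le> n - 2 then 2 * int k else if k = n - 1 then int n else int n - 2"])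
  have n4: "n \<ge> 4" using assms by simp
  show "(\<lambda>j. 4 * om (n - 1) j) \<in> weights (D n)" using n4 by (auto simp: weights_def om_def)
  show "\<forall>j\<in>{1..rank (D n)}. 4 * om (n - 1) j = (\<Sum>ia\<in>{1..rank (D n)}. (\<lambda>k. if k \<le> n - 2 then 2 * int k else if k = n - 1 then int n else int n - 2) ia * cartan (D n) ia j)"
  proof
    fix j assume j: "j \<in> {1..rank (D n)}"
    have j': "j \<in> {1..n}" using j by simp
    have e: "(\<Sum>ia\<in>{1..rank (D n)}. (\<lambda>k. if k \<le> n - 2 then 2 * int k else if k = n - 1 then int n else int n - 2) ia * cartan (D n) ia j)
      = 2 * (if j \<le> n - 2 then 2 * int j else if j = n - 1 then int n else int n - 2) - (if j \<le> n - 1 then (if (j - 1) \<le> n - 2 then 2 * int (j - 1) else if (j - 1) = n - 1 then int n else int n - 2) else 0)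
         - (if j + 1 \<le> n - 1 then (if (j + 1) \<le> n - 2 then 2 * int (j + 1) else if (j + 1) = n - 1 then int n else int n - 2) else 0)
         - (if j = n - 2 then (if n \<le> n - 2 then 2 * int n else if n = n - 1 then int n else int n - 2) else 0) - (if j = n then (if (n - 2) \<le> n - 2 then 2 * int (n - 2) else if (n - 2) = n - 1 then int n else int n - 2) else 0)"
      unfolding rank.simps using n4 by (subst colD'[OF j' n4]) auto
    have "j \<le> n - 3 \<or> j = n - 2 \<or> j = n - 1 \<or> j = n" using j' by auto
    then show "4 * om (n - 1) j = (\<Sum>ia\<in>{1..rank (D n)}. (\<lambda>k. if k \<le> n - 2 then 2 * int k else if k = n - 1 then int n else int n - 2) ia * cartan (D n) ia j)"
    proof (elim disjE)
      assume a: "j \<le> n - 3"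
      then have "j + 1 \<le> n - 2" "j - 1 \<le> n - 2" "j \<le> n - 2" "j \<noteq> n - 2" "j \<noteq> n" "j \<le> n - 1" "j + 1 \<le> n - 1" "j \<noteq> n - 1" using a n4 j' by auto
      then show ?thesis unfolding e using assms j' by (simp add: om_def; presburger)
    next
      assume a: "j = n - 2" 
      then have "j - 1 \<le> n - 2" "j \<le> n - 2" "j \<noteq> n" "j \<le> n - 1" "j + 1 \<le> n - 1" "\<not> j + 1 \<le> n - 2" "j + 1 = n - 1" "\<not> n \<le> n - 2" "n \<noteq> n - 1" "j \<noteq> n - 1" using a n4 j' by auto
      then show ?thesis unfolding e using assms j' a by (simp add: om_def; presburger)
    next
      assume a: "j = n - 1"
      then have "j - 1 \<le> n - 2" "\<not> j \<le> n - 2" "j \<noteq> n" "j \<le> n - 1" "\<not> j + 1 \<le> n - 1" "j \<noteq> n - 2" using a n4 j' by auto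
      then show ?thesis unfolding e using assms j' a by (simp add: om_def; presburger)
    next
      assume a: "j = n"
      then have "\<not> j \<le> n - 2" "\<not> j \<le> n - 1" "\<not> j + 1 \<le> n - 1" "j \<noteq> n - 2" "j \<noteq> n - 1" using a n4 j' by auto
      then show ?thesis unfolding e using assms j' a by (simp add: om_def; presburger)
    qed
  qed
qed

lemma RL_func:
  assumes v: "v \<in> root_lattice t" and h: "\<forall>i\<in>{1..rank t}. m dvd (\<Sum>j\<in>{1..rank t}. g j * cartan t i j)"
  shows "m dvd (\<Sum>j\<in>{1..rank t}. g j * v j)"
proof -
  obtain c where c: "\<forall>j\<in>{1..rank t}. v j = (\<Sum>i\<in>{1..rank t}. c i * cartan t i j)"
    using v by (auto simp: root_lattice_def)
  have "(\<Sum>j\<in>{1..rank t}. g j * v j) = (\<Sum>j\<in>{1..rank t}. \<Sum>i\<in>{1..rank t}. g j * (c i * cartan t i j))"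
    using c by (simp add: sum_distrib_left)
  also have "\<dots> = (\<Sum>i\<in>{1..rank t}. c i * (\<Sum>j\<in>{1..rank t}. g j * cartan t i j))"
    by (subst sum.swap) (simp add: sum_distrib_left algebra_simps)
  also have "m dvd \<dots>" by (rule dvd_sum) (use h in \<open>auto intro: dvd_mult\<close>)
  finally show ?thesis .
qed

lemma D_row:
  assumes i: "i \<in> {1..n}" and n: "n \<ge> 4" and g0: "g 0 = 0"
  shows "(\<Sum>j\<in>{1..n}. g j * cartan (D n) i j)
       = 2 * g i - (if i \<le> n - 1 then g (i - 1) else 0) - (if i + 1 \<le> n - 1 then g (i + 1) else 0)
         - (if i = n - 2 then g n else 0) - (if i = n then g (n - 2) else 0)"
  using colD'[OF i n, of g] g0 by (simp add: symD)

definition gD :: "nat \<Rightarrow> nat \<Rightarrow> int" where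
  "gD n j = (if j \<le> n - 2 then (if odd j then 2 else 0) else if j = n - 1 then 1 else -1)"

lemma gD_rows:
  assumes n: "n = 2*m+3" "m \<ge> 1"
  shows "\<forall>i\<in>{1..rank (D n)}. 4 dvd (\<Sum>j\<in>{1..rank (D n)}. gD n j * cartan (D n) i j)"
proof
  fix i assume i: "i \<in> {1..rank (D n)}"
  have n4: "n \<ge> 4" using n by simp
  have i': "i \<in> {1..n}" using i by simp
  have g0: "gD n 0 = 0" by (simp add: gD_def)
  have e: "(\<Sum>j\<in>{1..rank (D n)}. gD n j * cartan (D n) i j) = 2 * gD n i - (if i \<le> n - 1 then gD n (i - 1) else 0) - (if i + 1 \<le> n - 1 then gD n (i + 1) else 0)
         - (if i = n - 2 then gD n n else 0) - (if i = n then gD n (n - 2) else 0)"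
    unfolding rank.simps by (rule D_row[OF i' n4, of "gD n", OF g0])
  have "i \<le> n - 3 \<or> i = n - 2 \<or> i = n - 1 \<or> i = n" using i' by auto
  then show "4 dvd (\<Sum>j\<in>{1..rank (D n)}. gD n j * cartan (D n) i j)"
  proof (elim disjE)
    assume a: "i \<le> n - 3"
    then have "i + 1 \<le> n - 2" "i - 1 \<le> n - 2" "i \<le> n - 2" "i \<noteq> n - 2" "i \<noteq> n" "i \<le> n - 1" "i + 1 \<le> n - 1" using a n4 i' by auto
    moreover have "odd (i - 1) \<longleftrightarrow> even i" "odd (i + 1) \<longleftrightarrow> even i" using i' by auto
    ultimately show ?thesis unfolding e by (simp add: gD_def)
  next
    assume a: "i = n - 2"
    then have "i - 1 \<le> n - 2" "i \<le> n - 2" "i \<noteq> n" "i \<le> n - 1" "i + 1 \<le> n - 1" "\<not> i + 1 \<le> n - 2" "i + 1 = n - 1" "\<not> n \<le> n - 2" "n \<noteq> n - 1" "odd i" "even (i - 1)" using a n4 i' n by auto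
    then show ?thesis unfolding e using a by (simp add: gD_def)
  next
    assume a: "i = n - 1"
    then have "i - 1 \<le> n - 2" "\<not> i \<le> n - 2" "i \<noteq> n" "i \<le> n - 1" "\<not> i + 1 \<le> n - 1" "i \<noteq> n - 2" "odd (i - 1)" "i - 1 = n - 2" using a n4 i' n by auto
    then show ?thesis unfolding e using a by (simp add: gD_def)
  next
    assume a: "i = n"
    then have "\<not> i \<le> n - 2" "\<not> i \<le> n - 1" "\<not> i + 1 \<le> n - 1" "i \<noteq> n - 2" "odd (n - 2)" "n - 2 \<le> n - 2" "n - 2 \<noteq> n - 1" using a n4 i' n by auto
    then show ?thesis unfolding e using a by (simp add: gD_def)
  qed
qed

lemma sum_om: "(\<Sum>i\<in>{1..N}. a i * om i j) = (if j \<in> {1..N} then a j else 0)"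
proof -
  have "(\<Sum>i\<in>{1..N}. a i * om i j) = (\<Sum>i\<in>{1..N}. if i = j then a j else 0)"
    by (rule sum.cong) (auto simp: om_def)
  then show ?thesis by (simp add: sum.delta)
qed

lemma Psi_Dodd:
  assumes n: "n = 2*m+3" "m \<ge> 1"
  shows "w \<in> Psi (D n) \<longleftrightarrow> w \<in> dominant (D n) \<and> even (w (n - 1) + w n)"
proof
  have n4: "n \<ge> 4" using n by simp
  assume w: "w \<in> Psi (D n)"
  then have dom: "w \<in> dominant (D n)" and v: "(\<lambda>i. 2 * w i) \<in> root_lattice (D n)" by (auto simp: Psi_def)
  have "4 dvd (\<Sum>j\<in>{1..rank (D n)}. gD n j * (2 * w j))"
    using RL_func[OF v gD_rows[OF n]] .
  moreover have "(\<Sum>j\<in>{1..rank (D n)}. gD n j * (2 * w j))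
     = (\<Sum>j\<in>{1..n}. 4 * (if j \<le> n - 2 \<and> odd j then w j else 0) + ((if j = n - 1 then 2 * w (n - 1) else 0) - (if j = n then 2 * w n else 0)))"
    unfolding rank.simps by (rule sum.cong) (auto simp: gD_def)
  moreover have "\<dots> = 4 * (\<Sum>j\<in>{1..n}. (if j \<le> n - 2 \<and> odd j then w j else 0)) + (2 * w (n - 1) - 2 * w n)"
    using n4 by (simp add: sum.distrib sum_subtractf sum_distrib_left sum.delta, arith)
  ultimately have "4 dvd 4 * (\<Sum>j\<in>{1..n}. (if j \<le> n - 2 \<and> odd j then w j else 0)) + (2 * w (n - 1) - 2 * w n)" by simp
  then have "4 dvd (2 * w (n - 1) - 2 * w n)" by (simp add: dvd_add_right_iff)
  then have "even (w (n - 1) - w n)" by presburger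
  then show "w \<in> dominant (D n) \<and> even (w (n - 1) + w n)" using dom by presburger
next
  have n4: "n \<ge> 4" using n by simp
  assume "w \<in> dominant (D n) \<and> even (w (n - 1) + w n)"
  then have dom: "w \<in> dominant (D n)" and ev: "even (w (n - 1) + w n)" by auto
  define k where "k = (w (n - 1) - w n) div 2"
  have k: "w (n - 1) - w n = 2 * k" unfolding k_def using ev by presburger
  have r1: "(\<lambda>j. \<Sum>i\<in>{1..n-2}. w i * (2 * om i j)) \<in> root_lattice (D n)"
    by (rule RL_sum) (use D_low[OF n4] in auto)
  have r2: "(\<lambda>j. w n * (2 * (om (n - 1) j + om n j))) \<in> root_lattice (D n)"
    by (rule RL_smult[OF D_pair[OF n4]])
  have r3: "(\<lambda>j. k * (4 * om (n - 1) j)) \<in> root_lattice (D n)"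
    by (rule RL_smult[OF D_quad[OF n4]])
  have s: "(\<lambda>i. 2 * w i) = (\<lambda>j. (\<Sum>i\<in>{1..n-2}. w i * (2 * om i j)) + w n * (2 * (om (n - 1) j + om n j)) + k * (4 * om (n - 1) j))"
  proof
    fix j
    have "(\<Sum>i\<in>{1..n-2}. w i * (2 * om i j)) = (\<Sum>i\<in>{1..n-2}. (2 * w i) * om i j)"
      by (simp add: algebra_simps)
    also have "\<dots> = (if j \<in> {1..n-2} then 2 * w j else 0)" by (rule sum_om)
    finally have e: "(\<Sum>i\<in>{1..n-2}. w i * (2 * om i j)) = (if j \<in> {1..n-2} then 2 * w j else 0)" .
    have out: "j \<notin> {1..n} \<Longrightarrow> w j = 0" using dom by (auto simp: dominant_def weights_def)
    have "j \<in> {1..n-2} \<or> j = n - 1 \<or> j = n \<or> j \<notin> {1..n}" using n4 by auto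
    then show "2 * w j = (\<Sum>i\<in>{1..n-2}. w i * (2 * om i j)) + w n * (2 * (om (n - 1) j + om n j)) + k * (4 * om (n - 1) j)"
      unfolding e using n4 k out by (auto simp: om_def)
  qed
  have "(\<lambda>i. 2 * w i) \<in> root_lattice (D n)"
    unfolding s by (rule RL_add[OF RL_add[OF r1 r2] r3])
  then show "w \<in> Psi (D n)" using dom by (simp add: Psi_def)
qed

lemma Dodd_card:
  assumes n: "n = 2*m+3" "m \<ge> 1"
  shows "card (Psi_min (D n)) = n + 1"
proof -
  have n4: "n \<ge> 4" using n by simp
  let ?a = "\<lambda>j. 2 * om (n - 1) j" and ?b = "\<lambda>j. 2 * om n j" and ?c = "\<lambda>j. om (n - 1) j + om n j"
  let ?S = "insert ?a (insert ?b (insert ?c (om ` {1..n-2})))"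
  have omw: "om i \<in> weights (D n)" if "i \<in> {1..n}" for i using that by (auto simp: weights_def om_def)
  have Pa: "?a \<in> Psi (D n)" unfolding Psi_Dodd[OF n] using n4 by (auto simp: dominant_def weights_def om_def)
  have Pb: "?b \<in> Psi (D n)" unfolding Psi_Dodd[OF n] using n4 by (auto simp: dominant_def weights_def om_def)
  have Pc: "?c \<in> Psi (D n)" unfolding Psi_Dodd[OF n] using n4 by (auto simp: dominant_def weights_def om_def)
  have Plo: "om i \<in> Psi (D n)" if "i \<in> {1..n-2}" for i
    using om_Psi[of i "D n"] D_low[OF n4 that] that by auto
  have nza: "?a \<noteq> (\<lambda>j. 0)"
  proof
    assume "?a = (\<lambda>j. 0)" then have "?a (n - 1) = 0" by metis
    then show False by (simp add: om_def)
  qed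
  have nzb: "?b \<noteq> (\<lambda>j. 0)"
  proof
    assume "?b = (\<lambda>j. 0)" then have "?b n = 0" by metis
    then show False by (simp add: om_def)
  qed
  have nzc: "?c \<noteq> (\<lambda>j. 0)"
  proof
    assume "?c = (\<lambda>j. 0)"
    then have "?c n = 0" by metis
    then show False using n4 by (simp add: om_def split: if_splits)
  qed
  have "Psi_min (D n) = ?S"
  proof
    show "Psi_min (D n) \<subseteq> ?S"
    proof
      fix w assume w: "w \<in> Psi_min (D n)"
      have wP: "w \<in> Psi (D n)" using Psi_min_Psi[OF w] .
      have ev: "even (w (n - 1) + w n)" using wP unfolding Psi_Dodd[OF n] by blast
      have nn: "\<And>j. 0 \<le> w j" using Psi_nonneg[OF wP] .
      have out: "\<And>j. j \<notin> {1..n} \<Longrightarrow> w j = 0" using Psi_out[OF wP] by simp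
      show "w \<in> ?S"
      proof (cases "\<exists>i\<in>{1..n-2}. w i \<ge> 1")
        case True
        then obtain i where i: "i \<in> {1..n-2}" "w i \<ge> 1" by blast
        have "om i = w" using Psi_below[OF w Plo[OF i(1)] om_nz] i nn by (auto simp: om_def)
        then show ?thesis using i by blast
      next
        case False
        have z: "w j = 0" if "j \<noteq> n - 1" "j \<noteq> n" for j
        proof (cases "j \<in> {1..n-2}")
          case True then show ?thesis using False nn[of j] by force
        next
          case F: False then have "j \<notin> {1..n}" using that n4 by auto
          then show ?thesis using out by blast
        qed
        obtain j where j: "j \<in> {1..n}" "w j \<ge> 1" using nz_coord[OF wP Psi_min_nz[OF w]] by auto
        have jj: "j = n - 1 \<or> j = n" using z j by force
        have "(w (n - 1) \<ge> 1 \<and> w n \<ge> 1) \<or> w n = 0 \<or> w (n - 1) = 0" using nn[of n] nn[of "n - 1"] by linarith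
        then consider "w (n - 1) \<ge> 1" "w n \<ge> 1" | "w n = 0" | "w (n - 1) = 0" by blast
        then show ?thesis
        proof cases
          case 1
          have "\<forall>i. ?c i \<le> w i"
          proof
            fix i show "?c i \<le> w i" using 1 nn[of i] z[of i] n4 by (cases "i = n - 1"; cases "i = n") (auto simp: om_def)
          qed
          then have "?c = w" using Psi_below[OF w Pc nzc] by blast
          then show ?thesis by blast
        next
          case 2
          then have "w (n - 1) \<ge> 1" using jj j by auto
          then have "w (n - 1) \<ge> 2" using ev 2 by presburger
          have "\<forall>i. ?a i \<le> w i"
          proof
            fix i show "?a i \<le> w i" using \<open>w (n - 1) \<ge> 2\<close> nn[of i] z[of i] n4 by (cases "i = n - 1") (auto simp: om_def)
          qed
          then have "?a = w" using Psi_below[OF w Pa nza] by blast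
          then show ?thesis by blast
        next
          case 3
          then have "w n \<ge> 1" using jj j by auto
          then have "w n \<ge> 2" using ev 3 by presburger
          have "\<forall>i. ?b i \<le> w i"
          proof
            fix i show "?b i \<le> w i" using \<open>w n \<ge> 2\<close> nn[of i] z[of i] n4 by (cases "i = n") (auto simp: om_def)
          qed
          then have "?b = w" using Psi_below[OF w Pb nzb] by blast
          then show ?thesis by blast
        qed
      qed
    qed
  next
    show "?S \<subseteq> Psi_min (D n)"
    proof -
      have "om ` {1..n-2} \<subseteq> Psi_min (D n)"
        using om_min[of _ "D n"] D_low[OF n4] by auto
      moreover have "?a \<in> Psi_min (D n)"
      proof (rule Psi_min_intro[OF Pa nza])
        fix u assume u: "u \<in> Psi (D n)" "u \<noteq> (\<lambda>i. 0)" "\<forall>i. u i \<le> 2 * om (n - 1) i"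
        have nn: "\<And>j. 0 \<le> u j" using Psi_nonneg[OF u(1)] .
        have z: "u j = 0" if "j \<noteq> n - 1" for j using u(3)[rule_format, of j] nn[of j] that by (simp add: om_def)
        have ev: "even (u (n - 1) + u n)" using u(1) unfolding Psi_Dodd[OF n] by blast
        obtain j where "u j \<ge> 1" using nz_coord[OF u(1,2)] by auto
        then have "u (n - 1) \<ge> 1" using z[of j] by (cases "j = n - 1") auto
        moreover have "u (n - 1) \<le> 2" using u(3)[rule_format, of "n - 1"] by (simp add: om_def)
        moreover have "u n = 0" using z n4 by simp
        ultimately have "u (n - 1) = 2" using ev by presburger
        then show "u = ?a" using z by (auto simp: om_def)
      qed
      moreover have "?b \<in> Psi_min (D n)"
      proof (rule Psi_min_intro[OF Pb nzb])
        fix u assume u: "u \<in> Psi (D n)" "u \<noteq> (\<lambda>i. 0)" "\<forall>i. u i \<le> 2 * om n i"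
        have nn: "\<And>j. 0 \<le> u j" using Psi_nonneg[OF u(1)] .
        have z: "u j = 0" if "j \<noteq> n" for j using u(3)[rule_format, of j] nn[of j] that by (simp add: om_def)
        have ev: "even (u (n - 1) + u n)" using u(1) unfolding Psi_Dodd[OF n] by blast
        obtain j where "u j \<ge> 1" using nz_coord[OF u(1,2)] by auto
        then have "u n \<ge> 1" using z[of j] by (cases "j = n") auto
        moreover have "u n \<le> 2" using u(3)[rule_format, of n] by (simp add: om_def)
        moreover have "u (n - 1) = 0" using z n4 by simp
        ultimately have "u n = 2" using ev by presburger
        then show "u = ?b" using z by (auto simp: om_def)
      qed
      moreover have "?c \<in> Psi_min (D n)"
      proof (rule Psi_min_intro[OF Pc nzc])
        fix u assume u: "u \<in> Psi (D n)" "u \<noteq> (\<lambda>i. 0)" "\<forall>i. u i \<le> om (n - 1) i + om n i"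
        have nn: "\<And>j. 0 \<le> u j" using Psi_nonneg[OF u(1)] .
        have z: "u j = 0" if "j \<noteq> n - 1" "j \<noteq> n" for j using u(3)[rule_format, of j] nn[of j] that by (simp add: om_def)
        have ev: "even (u (n - 1) + u n)" using u(1) unfolding Psi_Dodd[OF n] by blast
        obtain j where "u j \<ge> 1" using nz_coord[OF u(1,2)] by auto
        then have "u (n - 1) \<ge> 1 \<or> u n \<ge> 1" using z[of j] by (cases "j = n - 1"; cases "j = n") auto
        moreover have "u (n - 1) \<le> 1" using u(3)[rule_format, of "n - 1"] n4 by (auto simp: om_def split: if_splits)
        moreover have "u n \<le> 1" using u(3)[rule_format, of n] n4 by (auto simp: om_def split: if_splits)
        ultimately have "u (n - 1) = 1" "u n = 1" using ev nn[of n] nn[of "n - 1"] by presburger+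
        then show "u = ?c" using z n4 by (intro ext) (auto simp: om_def)
      qed
      ultimately show ?thesis by blast
    qed
  qed
  moreover have "card ?S = n + 1"
  proof -
    have inj: "inj om" by (rule injI) (metis om_def zero_neq_one)
    have c0: "card (om ` {1..n-2}) = n - 2" using inj by (simp add: card_image inj_on_subset[of om UNIV])
    have "?c \<notin> om ` {1..n-2}"
    proof
      assume "?c \<in> om ` {1..n-2}"
      then obtain i where "i \<in> {1..n-2}" "?c = om i" by blast
      then have "om (n - 1) n + om n n = om i n" by metis
      then show False using \<open>i \<in> {1..n-2}\<close> n4 by (auto simp: om_def split: if_splits)
    qed
    moreover have "?b \<notin> insert ?c (om ` {1..n-2})"
    proof
      assume "?b \<in> insert ?c (om ` {1..n-2})"
      then obtain f where f: "f = ?c \<or> (\<exists>i\<in>{1..n-2}. f = om i)" "?b = f" by blast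
      then have "2 * om n n = f n" by metis
      then show False using f(1) n4 by (auto simp: om_def split: if_splits)
    qed
    moreover have "?a \<notin> insert ?b (insert ?c (om ` {1..n-2}))"
    proof
      assume "?a \<in> insert ?b (insert ?c (om ` {1..n-2}))"
      then obtain f where f: "f = ?b \<or> f = ?c \<or> (\<exists>i\<in>{1..n-2}. f = om i)" "?a = f" by blast
      then have "2 * om (n - 1) (n - 1) = f (n - 1)" by metis
      then show False using f(1) n4 by (auto simp: om_def split: if_splits)
    qed
    ultimately show ?thesis using c0 n4 by simp
  qed
  ultimately show ?thesis by simp
qed

definition v6 :: "int \<Rightarrow> int \<Rightarrow> int \<Rightarrow> int \<Rightarrow> int \<Rightarrow> int \<Rightarrow> nat \<Rightarrow> int" where
  "v6 a b c d e f = (\<lambda>i. if i = 1 then a else if i = 2 then b else if i = 3 then c else if i = 4 then d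
     else if i = 5 then e else if i = 6 then f else 0)"

lemma v6_app: "v6 a b c d e f 1 = a" "v6 a b c d e f 2 = b" "v6 a b c d e f 3 = c"
  "v6 a b c d e f 4 = d" "v6 a b c d e f 5 = e" "v6 a b c d e f 6 = f"
  by (simp_all add: v6_def)

lemma v6_app1: "v6 a b c d e f (Suc 0) = a" by (simp add: v6_def)

lemma v6_repr: "w \<in> weights E6 \<Longrightarrow> w = v6 (w 1) (w 2) (w 3) (w 4) (w 5) (w 6)"
  by (rule ext) (auto simp: weights_def v6_def)

lemma v6_weights: "v6 a b c d e f \<in> weights E6"
  by (auto simp: weights_def v6_def)

lemma v6_eq: "v6 a b c d e f = v6 a' b' c' d' e' f' \<longleftrightarrow> a = a' \<and> b = b' \<and> c = c' \<and> d = d' \<and> e = e' \<and> f = f'"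
  by (metis v6_app)

lemma v6_zero: "v6 a b c d e f = (\<lambda>i. 0) \<longleftrightarrow> a = 0 \<and> b = 0 \<and> c = 0 \<and> d = 0 \<and> e = 0 \<and> f = 0"
proof -
  have "(\<lambda>i. 0::int) = v6 0 0 0 0 0 0" by (rule ext) (simp add: v6_def)
  then show ?thesis by (simp add: v6_eq)
qed

lemma v6_le: "(\<forall>i. v6 a b c d e f i \<le> v6 a' b' c' d' e' f' i) \<longleftrightarrow> a \<le> a' \<and> b \<le> b' \<and> c \<le> c' \<and> d \<le> d' \<and> e \<le> e' \<and> f \<le> f'"
proof
  assume h: "\<forall>i. v6 a b c d e f i \<le> v6 a' b' c' d' e' f' i"
  show "a \<le> a' \<and> b \<le> b' \<and> c \<le> c' \<and> d \<le> d' \<and> e \<le> e' \<and> f \<le> f'"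
    using h[rule_format, of 1] h[rule_format, of 2] h[rule_format, of 3] h[rule_format, of 4] h[rule_format, of 5] h[rule_format, of 6]
    by (simp only: v6_app)
qed (simp add: v6_def)

lemma v6_nonneg: "(\<forall>i. 0 \<le> v6 a b c d e f i) \<longleftrightarrow> 0 \<le> a \<and> 0 \<le> b \<and> 0 \<le> c \<and> 0 \<le> d \<and> 0 \<le> e \<and> 0 \<le> f"
proof
  assume h: "\<forall>i. 0 \<le> v6 a b c d e f i"
  show "0 \<le> a \<and> 0 \<le> b \<and> 0 \<le> c \<and> 0 \<le> d \<and> 0 \<le> e \<and> 0 \<le> f"
    using h[rule_format, of 1] h[rule_format, of 2] h[rule_format, of 3] h[rule_format, of 4] h[rule_format, of 5] h[rule_format, of 6]
    by (simp only: v6_app)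
qed (simp add: v6_def)

lemma E6_g2: "v6 (0) (2) (0) (0) (0) (0) \<in> root_lattice E6"
  apply (rule RL_intro[where c="\<lambda>k. [(2),(4),(4),(6),(4),(2)] ! (k - 1)", OF v6_weights])
  unfolding rank.simps ivl_6 by (simp add: v6_def)

lemma E6_g4: "v6 (0) (0) (0) (2) (0) (0) \<in> root_lattice E6"
  apply (rule RL_intro[where c="\<lambda>k. [(4),(6),(8),(12),(8),(4)] ! (k - 1)", OF v6_weights])
  unfolding rank.simps ivl_6 by (simp add: v6_def)

lemma E6_g13: "v6 (2) (0) (2) (0) (0) (0) \<in> root_lattice E6"
  apply (rule RL_intro[where c="\<lambda>k. [(6),(6),(10),(12),(8),(4)] ! (k - 1)", OF v6_weights])
  unfolding rank.simps ivl_6 by (simp add: v6_def)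

lemma E6_g53: "v6 (0) (0) (2) (0) (2) (0) \<in> root_lattice E6"
  apply (rule RL_intro[where c="\<lambda>k. [(6),(8),(12),(16),(12),(6)] ! (k - 1)", OF v6_weights])
  unfolding rank.simps ivl_6 by (simp add: v6_def)

lemma E6_g63: "v6 (0) (0) (-2) (0) (0) (2) \<in> root_lattice E6"
  apply (rule RL_intro[where c="\<lambda>k. [(-2),(-2),(-4),(-4),(-2),(0)] ! (k - 1)", OF v6_weights])
  unfolding rank.simps ivl_6 by (simp add: v6_def)

lemma E6_g3: "v6 (0) (0) (6) (0) (0) (0) \<in> root_lattice E6"
  apply (rule RL_intro[where c="\<lambda>k. [(10),(12),(20),(24),(16),(8)] ! (k - 1)", OF v6_weights])
  unfolding rank.simps ivl_6 by (simp add: v6_def)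

definition gE :: "nat \<Rightarrow> int" where "gE j = [1,0,-1,0,1,-1] ! (j - 1)"

lemma E6_rows: "\<forall>i\<in>{1..rank E6}. 3 dvd (\<Sum>j\<in>{1..rank E6}. gE j * cartan E6 i j)"
  unfolding rank.simps ivl_6 by (simp add: gE_def)

lemma three_dvd2: "3 dvd (2 * (x::int)) \<Longrightarrow> 3 dvd x" by presburger

lemma Psi_E6: "v6 a b c d e f \<in> Psi E6 \<longleftrightarrow> 0 \<le> a \<and> 0 \<le> b \<and> 0 \<le> c \<and> 0 \<le> d \<and> 0 \<le> e \<and> 0 \<le> f \<and> 3 dvd (a - c + e - f)"
proof
  assume w: "v6 a b c d e f \<in> Psi E6"
  then have v: "(\<lambda>i. 2 * v6 a b c d e f i) \<in> root_lattice E6" by (simp add: Psi_def)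
  have "3 dvd (\<Sum>j\<in>{1..rank E6}. gE j * (2 * v6 a b c d e f j))" using RL_func[OF v E6_rows] .
  then have "3 dvd (2 * a - 2 * c + 2 * e - 2 * f)" unfolding rank.simps ivl_6 by (simp add: gE_def v6_app v6_app1 algebra_simps)
  then have "3 dvd (2 * (a - c + e - f))" by (simp add: algebra_simps)
  then have "3 dvd (a - c + e - f)" using three_dvd2 by blast
  moreover have "\<forall>i. 0 \<le> v6 a b c d e f i" using Psi_nonneg[OF w] by blast
  ultimately show "0 \<le> a \<and> 0 \<le> b \<and> 0 \<le> c \<and> 0 \<le> d \<and> 0 \<le> e \<and> 0 \<le> f \<and> 3 dvd (a - c + e - f)"
    unfolding v6_nonneg by blast
next
  assume h: "0 \<le> a \<and> 0 \<le> b \<and> 0 \<le> c \<and> 0 \<le> d \<and> 0 \<le> e \<and> 0 \<le> f \<and> 3 dvd (a - c + e - f)"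
  then obtain k0 where "a - c + e - f = 3 * k0" by (meson dvdE)
  then have k: "c - a - e + f = 3 * (- k0)" by simp
  define k where "k = - k0"
  have k: "c - a - e + f = 3 * k" using k unfolding k_def .
  have s: "(\<lambda>i. 2 * v6 a b c d e f i) = (\<lambda>i. b * v6 0 2 0 0 0 0 i + d * v6 0 0 0 2 0 0 i + a * v6 2 0 2 0 0 0 i
     + e * v6 0 0 2 0 2 0 i + f * v6 0 0 (-2) 0 0 2 i + k * v6 0 0 6 0 0 0 i)"
    using k by (intro ext) (simp add: v6_def)
  have "(\<lambda>i. 2 * v6 a b c d e f i) \<in> root_lattice E6"
    unfolding s using E6_g2 E6_g4 E6_g13 E6_g53 E6_g63 E6_g3
    by (intro RL_add RL_smult) simp_all
  moreover have "\<forall>i. 0 \<le> v6 a b c d e f i" unfolding v6_nonneg using h by blast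
  then have "v6 a b c d e f \<in> dominant E6" using v6_weights unfolding dominant_def by blast
  ultimately show "v6 a b c d e f \<in> Psi E6" by (simp add: Psi_def)
qed

lemma Psi_E6': "w \<in> Psi E6 \<Longrightarrow> w = v6 (w 1) (w 2) (w 3) (w 4) (w 5) (w 6)"
  by (rule v6_repr) (auto simp: Psi_def dominant_def)

lemma E6_cover:
  fixes a b c d e f :: int
  assumes "0 \<le> a" "0 \<le> b" "0 \<le> c" "0 \<le> d" "0 \<le> e" "0 \<le> f" "3 dvd (a - c + e - f)"
    "\<not> (a = 0 \<and> b = 0 \<and> c = 0 \<and> d = 0 \<and> e = 0 \<and> f = 0)"
  shows "(1 \<le> b) \<or> (1 \<le> d) \<or> (1 \<le> a \<and> 1 \<le> c) \<or> (1 \<le> c \<and> 1 \<le> e) \<or> (1 \<le> a \<and> 1 \<le> f) \<or> (1 \<le> e \<and> 1 \<le> f) \<or> (3 \<le> a) \<or> (2 \<le> a \<and> 1 \<le> e) \<or> (1 \<le> a \<and> 2 \<le> e) \<or> (3 \<le> e) \<or> (3 \<le> c) \<or> (2 \<le> c \<and> 1 \<le> f) \<or> (1 \<le> c \<and> 2 \<le> f) \<or> (3 \<le> f)"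
proof (cases "b \<ge> 1 \<or> d \<ge> 1 \<or> (a \<ge> 1 \<and> c \<ge> 1) \<or> (c \<ge> 1 \<and> e \<ge> 1) \<or> (a \<ge> 1 \<and> f \<ge> 1) \<or> (e \<ge> 1 \<and> f \<ge> 1)")
  case True then show ?thesis by blast
next
  case False
  then have nb: "\<not> b \<ge> 1" "\<not> d \<ge> 1" "\<not> (a \<ge> 1 \<and> c \<ge> 1)" "\<not> (c \<ge> 1 \<and> e \<ge> 1)" "\<not> (a \<ge> 1 \<and> f \<ge> 1)" "\<not> (e \<ge> 1 \<and> f \<ge> 1)" by blast+
  have b0: "b = 0" "d = 0" using nb(1,2) assms(2,4) by linarith+
  show ?thesis
  proof (cases "c = 0 \<and> f = 0")
    case True
    then have "3 dvd (a + e)" using assms(7) by simp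
    moreover have "a + e > 0" using True b0 assms by auto
    ultimately have "a + e \<ge> 3" by presburger
    then have "3 \<le> a \<or> (2 \<le> a \<and> 1 \<le> e) \<or> (1 \<le> a \<and> 2 \<le> e) \<or> 3 \<le> e" by linarith
    then show ?thesis by blast
  next
    case F2: False
    then have "c \<ge> 1 \<or> f \<ge> 1" using assms(3,6) by linarith
    then have "a = 0 \<and> e = 0" using nb(3-6) assms(1,5) by auto
    then have "3 dvd (c + f)" using assms(7) by (metis add.commute diff_0 diff_diff_eq dvd_minus_iff add_0)
    moreover have "c + f > 0" using \<open>a = 0 \<and> e = 0\<close> b0 assms by auto
    ultimately have "c + f \<ge> 3" by presburger
    then have "3 \<le> c \<or> (2 \<le> c \<and> 1 \<le> f) \<or> (1 \<le> c \<and> 2 \<le> f) \<or> 3 \<le> f" by linarith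
    then show ?thesis by blast
  qed
qed




lemma E6_min: "Psi_min E6 = {v6 0 1 0 0 0 0, v6 0 0 0 1 0 0, v6 1 0 1 0 0 0, v6 0 0 1 0 1 0, v6 1 0 0 0 0 1, v6 0 0 0 0 1 1, v6 3 0 0 0 0 0, v6 2 0 0 0 1 0, v6 1 0 0 0 2 0, v6 0 0 0 0 3 0, v6 0 0 3 0 0 0, v6 0 0 2 0 0 1, v6 0 0 1 0 0 2, v6 0 0 0 0 0 3}"
proof
  show "Psi_min E6 \<subseteq> {v6 0 1 0 0 0 0, v6 0 0 0 1 0 0, v6 1 0 1 0 0 0, v6 0 0 1 0 1 0, v6 1 0 0 0 0 1, v6 0 0 0 0 1 1, v6 3 0 0 0 0 0, v6 2 0 0 0 1 0, v6 1 0 0 0 2 0, v6 0 0 0 0 3 0, v6 0 0 3 0 0 0, v6 0 0 2 0 0 1, v6 0 0 1 0 0 2, v6 0 0 0 0 0 3}"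
  proof
    fix w assume w: "w \<in> Psi_min E6"
    define a where "a = w 1" define b where "b = w 2" define c where "c = w 3"
    define d where "d = w 4" define e where "e = w 5" define f where "f = w 6"
    have W: "w = v6 a b c d e f" unfolding a_def b_def c_def d_def e_def f_def by (rule Psi_E6'[OF Psi_min_Psi[OF w]])
    have P: "0 \<le> a \<and> 0 \<le> b \<and> 0 \<le> c \<and> 0 \<le> d \<and> 0 \<le> e \<and> 0 \<le> f \<and> 3 dvd (a - c + e - f)"
      using Psi_min_Psi[OF w] unfolding W Psi_E6 .
    have NZ: "\<not> (a = 0 \<and> b = 0 \<and> c = 0 \<and> d = 0 \<and> e = 0 \<and> f = 0)"
      using Psi_min_nz[OF w] unfolding W v6_zero .
    have "(1 \<le> b) \<or> (1 \<le> d) \<or> (1 \<le> a \<and> 1 \<le> c) \<or> (1 \<le> c \<and> 1 \<le> e) \<or> (1 \<le> a \<and> 1 \<le> f) \<or> (1 \<le> e \<and> 1 \<le> f) \<or> (3 \<le> a) \<or> (2 \<le> a \<and> 1 \<le> e) \<or> (1 \<le> a \<and> 2 \<le> e) \<or> (3 \<le> e) \<or> (3 \<le> c) \<or> (2 \<le> c \<and> 1 \<le> f) \<or> (1 \<le> c \<and> 2 \<le> f) \<or> (3 \<le> f)"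
      by (rule E6_cover) (use P NZ in auto)
    then show "w \<in> {v6 0 1 0 0 0 0, v6 0 0 0 1 0 0, v6 1 0 1 0 0 0, v6 0 0 1 0 1 0, v6 1 0 0 0 0 1, v6 0 0 0 0 1 1, v6 3 0 0 0 0 0, v6 2 0 0 0 1 0, v6 1 0 0 0 2 0, v6 0 0 0 0 3 0, v6 0 0 3 0 0 0, v6 0 0 2 0 0 1, v6 0 0 1 0 0 2, v6 0 0 0 0 0 3}"
    proof (elim disjE)
      assume h: "1 \<le> b"
      have "v6 0 1 0 0 0 0 = w" by (rule Psi_below[OF w]) (use h W P in \<open>simp_all add: Psi_E6 v6_zero v6_le\<close>)
      then show ?thesis by simp
    next
      assume h: "1 \<le> d"
      have "v6 0 0 0 1 0 0 = w" by (rule Psi_below[OF w]) (use h W P in \<open>simp_all add: Psi_E6 v6_zero v6_le\<close>)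
      then show ?thesis by simp
    next
      assume h: "1 \<le> a \<and> 1 \<le> c"
      have "v6 1 0 1 0 0 0 = w" by (rule Psi_below[OF w]) (use h W P in \<open>simp_all add: Psi_E6 v6_zero v6_le\<close>)
      then show ?thesis by simp
    next
      assume h: "1 \<le> c \<and> 1 \<le> e"
      have "v6 0 0 1 0 1 0 = w" by (rule Psi_below[OF w]) (use h W P in \<open>simp_all add: Psi_E6 v6_zero v6_le\<close>)
      then show ?thesis by simp
    next
      assume h: "1 \<le> a \<and> 1 \<le> f"
      have "v6 1 0 0 0 0 1 = w" by (rule Psi_below[OF w]) (use h W P in \<open>simp_all add: Psi_E6 v6_zero v6_le\<close>)
      then show ?thesis by simp
    next
      assume h: "1 \<le> e \<and> 1 \<le> f"
      have "v6 0 0 0 0 1 1 = w" by (rule Psi_below[OF w]) (use h W P in \<open>simp_all add: Psi_E6 v6_zero v6_le\<close>)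
      then show ?thesis by simp
    next
      assume h: "3 \<le> a"
      have "v6 3 0 0 0 0 0 = w" by (rule Psi_below[OF w]) (use h W P in \<open>simp_all add: Psi_E6 v6_zero v6_le\<close>)
      then show ?thesis by simp
    next
      assume h: "2 \<le> a \<and> 1 \<le> e"
      have "v6 2 0 0 0 1 0 = w" by (rule Psi_below[OF w]) (use h W P in \<open>simp_all add: Psi_E6 v6_zero v6_le\<close>)
      then show ?thesis by simp
    next
      assume h: "1 \<le> a \<and> 2 \<le> e"
      have "v6 1 0 0 0 2 0 = w" by (rule Psi_below[OF w]) (use h W P in \<open>simp_all add: Psi_E6 v6_zero v6_le\<close>)
      then show ?thesis by simp
    next
      assume h: "3 \<le> e"
      have "v6 0 0 0 0 3 0 = w" by (rule Psi_below[OF w]) (use h W P in \<open>simp_all add: Psi_E6 v6_zero v6_le\<close>)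
      then show ?thesis by simp
    next
      assume h: "3 \<le> c"
      have "v6 0 0 3 0 0 0 = w" by (rule Psi_below[OF w]) (use h W P in \<open>simp_all add: Psi_E6 v6_zero v6_le\<close>)
      then show ?thesis by simp
    next
      assume h: "2 \<le> c \<and> 1 \<le> f"
      have "v6 0 0 2 0 0 1 = w" by (rule Psi_below[OF w]) (use h W P in \<open>simp_all add: Psi_E6 v6_zero v6_le\<close>)
      then show ?thesis by simp
    next
      assume h: "1 \<le> c \<and> 2 \<le> f"
      have "v6 0 0 1 0 0 2 = w" by (rule Psi_below[OF w]) (use h W P in \<open>simp_all add: Psi_E6 v6_zero v6_le\<close>)
      then show ?thesis by simp
    next
      assume h: "3 \<le> f"
      have "v6 0 0 0 0 0 3 = w" by (rule Psi_below[OF w]) (use h W P in \<open>simp_all add: Psi_E6 v6_zero v6_le\<close>)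
      then show ?thesis by simp
    qed
  qed
next
  show "{v6 0 1 0 0 0 0, v6 0 0 0 1 0 0, v6 1 0 1 0 0 0, v6 0 0 1 0 1 0, v6 1 0 0 0 0 1, v6 0 0 0 0 1 1, v6 3 0 0 0 0 0, v6 2 0 0 0 1 0, v6 1 0 0 0 2 0, v6 0 0 0 0 3 0, v6 0 0 3 0 0 0, v6 0 0 2 0 0 1, v6 0 0 1 0 0 2, v6 0 0 0 0 0 3} \<subseteq> Psi_min E6"
  proof -
    have M: "v6 p q r s t z \<in> Psi_min E6"
      if "v6 p q r s t z \<in> Psi E6" "v6 p q r s t z \<noteq> (\<lambda>i. 0)"
        "\<And>a b c d e f. v6 a b c d e f \<in> Psi E6 \<Longrightarrow> v6 a b c d e f \<noteq> (\<lambda>i. 0)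
           \<Longrightarrow> (\<forall>i. v6 a b c d e f i \<le> v6 p q r s t z i) \<Longrightarrow> a = p \<and> b = q \<and> c = r \<and> d = s \<and> e = t \<and> f = z"
      for p q r s t z
    proof (rule Psi_min_intro[OF that(1,2)])
      fix u assume u: "u \<in> Psi E6" "u \<noteq> (\<lambda>i. 0)" "\<forall>i. u i \<le> v6 p q r s t z i"
      have U: "u = v6 (u 1) (u 2) (u 3) (u 4) (u 5) (u 6)" by (rule Psi_E6'[OF u(1)])
      show "u = v6 p q r s t z" using that(3)[of "u 1" "u 2" "u 3" "u 4" "u 5" "u 6"] u U by (metis v6_eq)
    qed

    have m0: "v6 0 1 0 0 0 0 \<in> Psi_min E6"
    proof (rule M)
      show "v6 0 1 0 0 0 0 \<in> Psi E6" by (simp add: Psi_E6)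
      show "v6 0 1 0 0 0 0 \<noteq> (\<lambda>i. 0)" by (simp add: v6_zero)
    next
      fix a b c d e f assume A: "v6 a b c d e f \<in> Psi E6" "v6 a b c d e f \<noteq> (\<lambda>i. 0)" "\<forall>i. v6 a b c d e f i \<le> v6 0 1 0 0 0 0 i"
      have P: "0 \<le> a" "0 \<le> b" "0 \<le> c" "0 \<le> d" "0 \<le> e" "0 \<le> f" "3 dvd (a - c + e - f)" using A(1) unfolding Psi_E6 by blast+
      have L: "a \<le> 0" "b \<le> 1" "c \<le> 0" "d \<le> 0" "e \<le> 0" "f \<le> 0" using A(3) unfolding v6_le by blast+
      have NZ: "\<not> (a = 0 \<and> b = 0 \<and> c = 0 \<and> d = 0 \<and> e = 0 \<and> f = 0)" using A(2) unfolding v6_zero .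
      have Z: "a = 0" "c = 0" "d = 0" "e = 0" "f = 0" using P L by linarith+
      have "b = 1" using P(7) NZ L P(1-6) unfolding Z by presburger
      then show "a = 0 \<and> b = 1 \<and> c = 0 \<and> d = 0 \<and> e = 0 \<and> f = 0" using Z by simp
    qed
    have m1: "v6 0 0 0 1 0 0 \<in> Psi_min E6"
    proof (rule M)
      show "v6 0 0 0 1 0 0 \<in> Psi E6" by (simp add: Psi_E6)
      show "v6 0 0 0 1 0 0 \<noteq> (\<lambda>i. 0)" by (simp add: v6_zero)
    next
      fix a b c d e f assume A: "v6 a b c d e f \<in> Psi E6" "v6 a b c d e f \<noteq> (\<lambda>i. 0)" "\<forall>i. v6 a b c d e f i \<le> v6 0 0 0 1 0 0 i"
      have P: "0 \<le> a" "0 \<le> b" "0 \<le> c" "0 \<le> d" "0 \<le> e" "0 \<le> f" "3 dvd (a - c + e - f)" using A(1) unfolding Psi_E6 by blast+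
      have L: "a \<le> 0" "b \<le> 0" "c \<le> 0" "d \<le> 1" "e \<le> 0" "f \<le> 0" using A(3) unfolding v6_le by blast+
      have NZ: "\<not> (a = 0 \<and> b = 0 \<and> c = 0 \<and> d = 0 \<and> e = 0 \<and> f = 0)" using A(2) unfolding v6_zero .
      have Z: "a = 0" "b = 0" "c = 0" "e = 0" "f = 0" using P L by linarith+
      have "d = 1" using P(7) NZ L P(1-6) unfolding Z by presburger
      then show "a = 0 \<and> b = 0 \<and> c = 0 \<and> d = 1 \<and> e = 0 \<and> f = 0" using Z by simp
    qed
    have m2: "v6 1 0 1 0 0 0 \<in> Psi_min E6"
    proof (rule M)
      show "v6 1 0 1 0 0 0 \<in> Psi E6" by (simp add: Psi_E6)
      show "v6 1 0 1 0 0 0 \<noteq> (\<lambda>i. 0)" by (simp add: v6_zero)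
    next
      fix a b c d e f assume A: "v6 a b c d e f \<in> Psi E6" "v6 a b c d e f \<noteq> (\<lambda>i. 0)" "\<forall>i. v6 a b c d e f i \<le> v6 1 0 1 0 0 0 i"
      have P: "0 \<le> a" "0 \<le> b" "0 \<le> c" "0 \<le> d" "0 \<le> e" "0 \<le> f" "3 dvd (a - c + e - f)" using A(1) unfolding Psi_E6 by blast+
      have L: "a \<le> 1" "b \<le> 0" "c \<le> 1" "d \<le> 0" "e \<le> 0" "f \<le> 0" using A(3) unfolding v6_le by blast+
      have NZ: "\<not> (a = 0 \<and> b = 0 \<and> c = 0 \<and> d = 0 \<and> e = 0 \<and> f = 0)" using A(2) unfolding v6_zero .
      have Z: "b = 0" "d = 0" "e = 0" "f = 0" using P L by linarith+
      have "a = 1 \<and> c = 1" using P(7) NZ L P(1-6) unfolding Z by presburger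
      then show "a = 1 \<and> b = 0 \<and> c = 1 \<and> d = 0 \<and> e = 0 \<and> f = 0" using Z by simp
    qed
    have m3: "v6 0 0 1 0 1 0 \<in> Psi_min E6"
    proof (rule M)
      show "v6 0 0 1 0 1 0 \<in> Psi E6" by (simp add: Psi_E6)
      show "v6 0 0 1 0 1 0 \<noteq> (\<lambda>i. 0)" by (simp add: v6_zero)
    next
      fix a b c d e f assume A: "v6 a b c d e f \<in> Psi E6" "v6 a b c d e f \<noteq> (\<lambda>i. 0)" "\<forall>i. v6 a b c d e f i \<le> v6 0 0 1 0 1 0 i"
      have P: "0 \<le> a" "0 \<le> b" "0 \<le> c" "0 \<le> d" "0 \<le> e" "0 \<le> f" "3 dvd (a - c + e - f)" using A(1) unfolding Psi_E6 by blast+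
      have L: "a \<le> 0" "b \<le> 0" "c \<le> 1" "d \<le> 0" "e \<le> 1" "f \<le> 0" using A(3) unfolding v6_le by blast+
      have NZ: "\<not> (a = 0 \<and> b = 0 \<and> c = 0 \<and> d = 0 \<and> e = 0 \<and> f = 0)" using A(2) unfolding v6_zero .
      have Z: "a = 0" "b = 0" "d = 0" "f = 0" using P L by linarith+
      have "c = 1 \<and> e = 1" using P(7) NZ L P(1-6) unfolding Z by presburger
      then show "a = 0 \<and> b = 0 \<and> c = 1 \<and> d = 0 \<and> e = 1 \<and> f = 0" using Z by simp
    qed
    have m4: "v6 1 0 0 0 0 1 \<in> Psi_min E6"
    proof (rule M)
      show "v6 1 0 0 0 0 1 \<in> Psi E6" by (simp add: Psi_E6)
      show "v6 1 0 0 0 0 1 \<noteq> (\<lambda>i. 0)" by (simp add: v6_zero)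
    next
      fix a b c d e f assume A: "v6 a b c d e f \<in> Psi E6" "v6 a b c d e f \<noteq> (\<lambda>i. 0)" "\<forall>i. v6 a b c d e f i \<le> v6 1 0 0 0 0 1 i"
      have P: "0 \<le> a" "0 \<le> b" "0 \<le> c" "0 \<le> d" "0 \<le> e" "0 \<le> f" "3 dvd (a - c + e - f)" using A(1) unfolding Psi_E6 by blast+
      have L: "a \<le> 1" "b \<le> 0" "c \<le> 0" "d \<le> 0" "e \<le> 0" "f \<le> 1" using A(3) unfolding v6_le by blast+
      have NZ: "\<not> (a = 0 \<and> b = 0 \<and> c = 0 \<and> d = 0 \<and> e = 0 \<and> f = 0)" using A(2) unfolding v6_zero .
      have Z: "b = 0" "c = 0" "d = 0" "e = 0" using P L by linarith+
      have "a = 1 \<and> f = 1" using P(7) NZ L P(1-6) unfolding Z by presburger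
      then show "a = 1 \<and> b = 0 \<and> c = 0 \<and> d = 0 \<and> e = 0 \<and> f = 1" using Z by simp
    qed
    have m5: "v6 0 0 0 0 1 1 \<in> Psi_min E6"
    proof (rule M)
      show "v6 0 0 0 0 1 1 \<in> Psi E6" by (simp add: Psi_E6)
      show "v6 0 0 0 0 1 1 \<noteq> (\<lambda>i. 0)" by (simp add: v6_zero)
    next
      fix a b c d e f assume A: "v6 a b c d e f \<in> Psi E6" "v6 a b c d e f \<noteq> (\<lambda>i. 0)" "\<forall>i. v6 a b c d e f i \<le> v6 0 0 0 0 1 1 i"
      have P: "0 \<le> a" "0 \<le> b" "0 \<le> c" "0 \<le> d" "0 \<le> e" "0 \<le> f" "3 dvd (a - c + e - f)" using A(1) unfolding Psi_E6 by blast+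
      have L: "a \<le> 0" "b \<le> 0" "c \<le> 0" "d \<le> 0" "e \<le> 1" "f \<le> 1" using A(3) unfolding v6_le by blast+
      have NZ: "\<not> (a = 0 \<and> b = 0 \<and> c = 0 \<and> d = 0 \<and> e = 0 \<and> f = 0)" using A(2) unfolding v6_zero .
      have Z: "a = 0" "b = 0" "c = 0" "d = 0" using P L by linarith+
      have "e = 1 \<and> f = 1" using P(7) NZ L P(1-6) unfolding Z by presburger
      then show "a = 0 \<and> b = 0 \<and> c = 0 \<and> d = 0 \<and> e = 1 \<and> f = 1" using Z by simp
    qed
    have m6: "v6 3 0 0 0 0 0 \<in> Psi_min E6"
    proof (rule M)
      show "v6 3 0 0 0 0 0 \<in> Psi E6" by (simp add: Psi_E6)
      show "v6 3 0 0 0 0 0 \<noteq> (\<lambda>i. 0)" by (simp add: v6_zero)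
    next
      fix a b c d e f assume A: "v6 a b c d e f \<in> Psi E6" "v6 a b c d e f \<noteq> (\<lambda>i. 0)" "\<forall>i. v6 a b c d e f i \<le> v6 3 0 0 0 0 0 i"
      have P: "0 \<le> a" "0 \<le> b" "0 \<le> c" "0 \<le> d" "0 \<le> e" "0 \<le> f" "3 dvd (a - c + e - f)" using A(1) unfolding Psi_E6 by blast+
      have L: "a \<le> 3" "b \<le> 0" "c \<le> 0" "d \<le> 0" "e \<le> 0" "f \<le> 0" using A(3) unfolding v6_le by blast+
      have NZ: "\<not> (a = 0 \<and> b = 0 \<and> c = 0 \<and> d = 0 \<and> e = 0 \<and> f = 0)" using A(2) unfolding v6_zero .
      have Z: "b = 0" "c = 0" "d = 0" "e = 0" "f = 0" using P L by linarith+
      have "a = 3" using P(7) NZ L P(1-6) unfolding Z by presburger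
      then show "a = 3 \<and> b = 0 \<and> c = 0 \<and> d = 0 \<and> e = 0 \<and> f = 0" using Z by simp
    qed
    have m7: "v6 2 0 0 0 1 0 \<in> Psi_min E6"
    proof (rule M)
      show "v6 2 0 0 0 1 0 \<in> Psi E6" by (simp add: Psi_E6)
      show "v6 2 0 0 0 1 0 \<noteq> (\<lambda>i. 0)" by (simp add: v6_zero)
    next
      fix a b c d e f assume A: "v6 a b c d e f \<in> Psi E6" "v6 a b c d e f \<noteq> (\<lambda>i. 0)" "\<forall>i. v6 a b c d e f i \<le> v6 2 0 0 0 1 0 i"
      have P: "0 \<le> a" "0 \<le> b" "0 \<le> c" "0 \<le> d" "0 \<le> e" "0 \<le> f" "3 dvd (a - c + e - f)" using A(1) unfolding Psi_E6 by blast+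
      have L: "a \<le> 2" "b \<le> 0" "c \<le> 0" "d \<le> 0" "e \<le> 1" "f \<le> 0" using A(3) unfolding v6_le by blast+
      have NZ: "\<not> (a = 0 \<and> b = 0 \<and> c = 0 \<and> d = 0 \<and> e = 0 \<and> f = 0)" using A(2) unfolding v6_zero .
      have Z: "b = 0" "c = 0" "d = 0" "f = 0" using P L by linarith+
      have "a = 2 \<and> e = 1" using P(7) NZ L P(1-6) unfolding Z by presburger
      then show "a = 2 \<and> b = 0 \<and> c = 0 \<and> d = 0 \<and> e = 1 \<and> f = 0" using Z by simp
    qed
    have m8: "v6 1 0 0 0 2 0 \<in> Psi_min E6"
    proof (rule M)
      show "v6 1 0 0 0 2 0 \<in> Psi E6" by (simp add: Psi_E6)
      show "v6 1 0 0 0 2 0 \<noteq> (\<lambda>i. 0)" by (simp add: v6_zero)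
    next
      fix a b c d e f assume A: "v6 a b c d e f \<in> Psi E6" "v6 a b c d e f \<noteq> (\<lambda>i. 0)" "\<forall>i. v6 a b c d e f i \<le> v6 1 0 0 0 2 0 i"
      have P: "0 \<le> a" "0 \<le> b" "0 \<le> c" "0 \<le> d" "0 \<le> e" "0 \<le> f" "3 dvd (a - c + e - f)" using A(1) unfolding Psi_E6 by blast+
      have L: "a \<le> 1" "b \<le> 0" "c \<le> 0" "d \<le> 0" "e \<le> 2" "f \<le> 0" using A(3) unfolding v6_le by blast+
      have NZ: "\<not> (a = 0 \<and> b = 0 \<and> c = 0 \<and> d = 0 \<and> e = 0 \<and> f = 0)" using A(2) unfolding v6_zero .
      have Z: "b = 0" "c = 0" "d = 0" "f = 0" using P L by linarith+
      have "a = 1 \<and> e = 2" using P(7) NZ L P(1-6) unfolding Z by presburger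
      then show "a = 1 \<and> b = 0 \<and> c = 0 \<and> d = 0 \<and> e = 2 \<and> f = 0" using Z by simp
    qed
    have m9: "v6 0 0 0 0 3 0 \<in> Psi_min E6"
    proof (rule M)
      show "v6 0 0 0 0 3 0 \<in> Psi E6" by (simp add: Psi_E6)
      show "v6 0 0 0 0 3 0 \<noteq> (\<lambda>i. 0)" by (simp add: v6_zero)
    next
      fix a b c d e f assume A: "v6 a b c d e f \<in> Psi E6" "v6 a b c d e f \<noteq> (\<lambda>i. 0)" "\<forall>i. v6 a b c d e f i \<le> v6 0 0 0 0 3 0 i"
      have P: "0 \<le> a" "0 \<le> b" "0 \<le> c" "0 \<le> d" "0 \<le> e" "0 \<le> f" "3 dvd (a - c + e - f)" using A(1) unfolding Psi_E6 by blast+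
      have L: "a \<le> 0" "b \<le> 0" "c \<le> 0" "d \<le> 0" "e \<le> 3" "f \<le> 0" using A(3) unfolding v6_le by blast+
      have NZ: "\<not> (a = 0 \<and> b = 0 \<and> c = 0 \<and> d = 0 \<and> e = 0 \<and> f = 0)" using A(2) unfolding v6_zero .
      have Z: "a = 0" "b = 0" "c = 0" "d = 0" "f = 0" using P L by linarith+
      have "e = 3" using P(7) NZ L P(1-6) unfolding Z by presburger
      then show "a = 0 \<and> b = 0 \<and> c = 0 \<and> d = 0 \<and> e = 3 \<and> f = 0" using Z by simp
    qed
    have m10: "v6 0 0 3 0 0 0 \<in> Psi_min E6"
    proof (rule M)
      show "v6 0 0 3 0 0 0 \<in> Psi E6" by (simp add: Psi_E6)
      show "v6 0 0 3 0 0 0 \<noteq> (\<lambda>i. 0)" by (simp add: v6_zero)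
    next
      fix a b c d e f assume A: "v6 a b c d e f \<in> Psi E6" "v6 a b c d e f \<noteq> (\<lambda>i. 0)" "\<forall>i. v6 a b c d e f i \<le> v6 0 0 3 0 0 0 i"
      have P: "0 \<le> a" "0 \<le> b" "0 \<le> c" "0 \<le> d" "0 \<le> e" "0 \<le> f" "3 dvd (a - c + e - f)" using A(1) unfolding Psi_E6 by blast+
      have L: "a \<le> 0" "b \<le> 0" "c \<le> 3" "d \<le> 0" "e \<le> 0" "f \<le> 0" using A(3) unfolding v6_le by blast+
      have NZ: "\<not> (a = 0 \<and> b = 0 \<and> c = 0 \<and> d = 0 \<and> e = 0 \<and> f = 0)" using A(2) unfolding v6_zero .
      have Z: "a = 0" "b = 0" "d = 0" "e = 0" "f = 0" using P L by linarith+
      have "c = 3" using P(7) NZ L P(1-6) unfolding Z by presburger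
      then show "a = 0 \<and> b = 0 \<and> c = 3 \<and> d = 0 \<and> e = 0 \<and> f = 0" using Z by simp
    qed
    have m11: "v6 0 0 2 0 0 1 \<in> Psi_min E6"
    proof (rule M)
      show "v6 0 0 2 0 0 1 \<in> Psi E6" by (simp add: Psi_E6)
      show "v6 0 0 2 0 0 1 \<noteq> (\<lambda>i. 0)" by (simp add: v6_zero)
    next
      fix a b c d e f assume A: "v6 a b c d e f \<in> Psi E6" "v6 a b c d e f \<noteq> (\<lambda>i. 0)" "\<forall>i. v6 a b c d e f i \<le> v6 0 0 2 0 0 1 i"
      have P: "0 \<le> a" "0 \<le> b" "0 \<le> c" "0 \<le> d" "0 \<le> e" "0 \<le> f" "3 dvd (a - c + e - f)" using A(1) unfolding Psi_E6 by blast+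
      have L: "a \<le> 0" "b \<le> 0" "c \<le> 2" "d \<le> 0" "e \<le> 0" "f \<le> 1" using A(3) unfolding v6_le by blast+
      have NZ: "\<not> (a = 0 \<and> b = 0 \<and> c = 0 \<and> d = 0 \<and> e = 0 \<and> f = 0)" using A(2) unfolding v6_zero .
      have Z: "a = 0" "b = 0" "d = 0" "e = 0" using P L by linarith+
      have "c = 2 \<and> f = 1" using P(7) NZ L P(1-6) unfolding Z by presburger
      then show "a = 0 \<and> b = 0 \<and> c = 2 \<and> d = 0 \<and> e = 0 \<and> f = 1" using Z by simp
    qed
    have m12: "v6 0 0 1 0 0 2 \<in> Psi_min E6"
    proof (rule M)
      show "v6 0 0 1 0 0 2 \<in> Psi E6" by (simp add: Psi_E6)
      show "v6 0 0 1 0 0 2 \<noteq> (\<lambda>i. 0)" by (simp add: v6_zero)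
    next
      fix a b c d e f assume A: "v6 a b c d e f \<in> Psi E6" "v6 a b c d e f \<noteq> (\<lambda>i. 0)" "\<forall>i. v6 a b c d e f i \<le> v6 0 0 1 0 0 2 i"
      have P: "0 \<le> a" "0 \<le> b" "0 \<le> c" "0 \<le> d" "0 \<le> e" "0 \<le> f" "3 dvd (a - c + e - f)" using A(1) unfolding Psi_E6 by blast+
      have L: "a \<le> 0" "b \<le> 0" "c \<le> 1" "d \<le> 0" "e \<le> 0" "f \<le> 2" using A(3) unfolding v6_le by blast+
      have NZ: "\<not> (a = 0 \<and> b = 0 \<and> c = 0 \<and> d = 0 \<and> e = 0 \<and> f = 0)" using A(2) unfolding v6_zero .
      have Z: "a = 0" "b = 0" "d = 0" "e = 0" using P L by linarith+
      have "c = 1 \<and> f = 2" using P(7) NZ L P(1-6) unfolding Z by presburger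
      then show "a = 0 \<and> b = 0 \<and> c = 1 \<and> d = 0 \<and> e = 0 \<and> f = 2" using Z by simp
    qed
    have m13: "v6 0 0 0 0 0 3 \<in> Psi_min E6"
    proof (rule M)
      show "v6 0 0 0 0 0 3 \<in> Psi E6" by (simp add: Psi_E6)
      show "v6 0 0 0 0 0 3 \<noteq> (\<lambda>i. 0)" by (simp add: v6_zero)
    next
      fix a b c d e f assume A: "v6 a b c d e f \<in> Psi E6" "v6 a b c d e f \<noteq> (\<lambda>i. 0)" "\<forall>i. v6 a b c d e f i \<le> v6 0 0 0 0 0 3 i"
      have P: "0 \<le> a" "0 \<le> b" "0 \<le> c" "0 \<le> d" "0 \<le> e" "0 \<le> f" "3 dvd (a - c + e - f)" using A(1) unfolding Psi_E6 by blast+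
      have L: "a \<le> 0" "b \<le> 0" "c \<le> 0" "d \<le> 0" "e \<le> 0" "f \<le> 3" using A(3) unfolding v6_le by blast+
      have NZ: "\<not> (a = 0 \<and> b = 0 \<and> c = 0 \<and> d = 0 \<and> e = 0 \<and> f = 0)" using A(2) unfolding v6_zero .
      have Z: "a = 0" "b = 0" "c = 0" "d = 0" "e = 0" using P L by linarith+
      have "f = 3" using P(7) NZ L P(1-6) unfolding Z by presburger
      then show "a = 0 \<and> b = 0 \<and> c = 0 \<and> d = 0 \<and> e = 0 \<and> f = 3" using Z by simp
    qed
    show ?thesis using m0 m1 m2 m3 m4 m5 m6 m7 m8 m9 m10 m11 m12 m13 by simp
  qed
qed


lemma E6_card: "card (Psi_min E6) = 14"
  unfolding E6_min by (simp add: v6_eq)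

lemma A_arith:
  fixes i j n :: nat
  assumes "1 \<le> i" "1 \<le> j" "i \<le> n" "j \<le> n"
  defines "Cf \<equiv> \<lambda>k. 2 * int (min i k) * (int (n + 1) - int (max i k))"
  shows "2 * Cf j - Cf (j - 1) - Cf (j + 1) = 2 * int (n + 1) * om i j"
proof -
  have j1: "int (j - 1) = int j - 1" using assms by simp
  consider "j < i" | "j = i" | "j > i" by linarith
  then show ?thesis
  proof cases
    case 1
    then have "min i j = j" "min i (j - 1) = j - 1" "min i (j + 1) = j + 1" "max i j = i" "max i (j - 1) = i" "max i (j + 1) = i" "om i j = 0"
      by (auto simp: om_def)
    then show ?thesis unfolding Cf_def using j1 by (simp add: algebra_simps)
  next
    case 2
    then have "min i j = i" "min i (j - 1) = i - 1" "min i (j + 1) = i" "max i j = i" "max i (j - 1) = i" "max i (j + 1) = i + 1" "om i j = 1"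
      by (auto simp: om_def)
    then show ?thesis unfolding Cf_def using j1 2 by (simp add: algebra_simps)
  next
    case 3
    then have "min i j = i" "min i (j - 1) = i" "min i (j + 1) = i" "max i j = j" "max i (j - 1) = j - 1" "max i (j + 1) = j + 1" "om i j = 0"
      by (auto simp: om_def)
    then show ?thesis unfolding Cf_def using j1 by (simp add: algebra_simps)
  qed
qed

lemma A_big:
  assumes i: "i \<in> {1..n}"
  shows "(\<lambda>j. 2 * int (n + 1) * om i j) \<in> root_lattice (A n)"
proof (rule RL_intro[where c="\<lambda>k. 2 * int (min i k) * (int (n + 1) - int (max i k))"])
  show "(\<lambda>j. 2 * int (n + 1) * om i j) \<in> weights (A n)" using i by (auto simp: weights_def om_def)
  show "\<forall>j\<in>{1..rank (A n)}. 2 * int (n + 1) * om i j = (\<Sum>ia\<in>{1..rank (A n)}. 2 * int (min i ia) * (int (n + 1) - int (max i ia)) * cartan (A n) ia j)"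
  proof
    fix j assume j: "j \<in> {1..rank (A n)}"
    then have j': "j \<in> {1..n}" by simp
    have e1: "(if 2 \<le> j then 2 * int (min i (j - 1)) * (int (n + 1) - int (max i (j - 1))) else 0) = 2 * int (min i (j - 1)) * (int (n + 1) - int (max i (j - 1)))"
      using j' by auto
    have e2: "(if j < n then 2 * int (min i (j + 1)) * (int (n + 1) - int (max i (j + 1))) else 0) = 2 * int (min i (j + 1)) * (int (n + 1) - int (max i (j + 1)))"
      using j' i by auto
    show "2 * int (n + 1) * om i j = (\<Sum>ia\<in>{1..rank (A n)}. 2 * int (min i ia) * (int (n + 1) - int (max i ia)) * cartan (A n) ia j)"
      unfolding rank.simps colA[OF j'] e1 e2 using A_arith[of i j n] i j' by simp
  qed
qed

lemma A_pair:
  assumes n: "n \<ge> 2"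
  shows "(\<lambda>j. 2 * (om 1 j + om n j)) \<in> root_lattice (A n)"
proof (rule RL_intro[where c="\<lambda>k. 2"])
  show "(\<lambda>j. 2 * (om 1 j + om n j)) \<in> weights (A n)" using n by (auto simp: weights_def om_def)
  show "\<forall>j\<in>{1..rank (A n)}. 2 * (om 1 j + om n j) = (\<Sum>ia\<in>{1..rank (A n)}. 2 * cartan (A n) ia j)"
  proof
    fix j assume j: "j \<in> {1..rank (A n)}"
    then have j': "j \<in> {1..n}" by simp
    show "2 * (om 1 j + om n j) = (\<Sum>ia\<in>{1..rank (A n)}. 2 * cartan (A n) ia j)"
      unfolding rank.simps colA[OF j', of "\<lambda>_. 2"] using j' n by (auto simp: om_def)
  qed
qed

lemma A_rows:
  assumes n: "n \<ge> 2"
  shows "\<forall>i\<in>{1..rank (A n)}. int (n + 1) dvd (\<Sum>j\<in>{1..rank (A n)}. int j * cartan (A n) i j)"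
proof
  fix i assume i: "i \<in> {1..rank (A n)}"
  then have i': "i \<in> {1..n}" by simp
  have "(\<Sum>j\<in>{1..rank (A n)}. int j * cartan (A n) i j) = (\<Sum>j\<in>{1..n}. int j * cartan (A n) j i)"
    by (simp add: symA)
  also have "\<dots> = 2 * int i - (if 2 \<le> i then int (i - 1) else 0) - (if i < n then int (i + 1) else 0)"
    by (rule colA[OF i'])
  also have "\<dots> = (if i = n then int (n + 1) else 0)"
    using i' n by auto
  finally show "int (n + 1) dvd (\<Sum>j\<in>{1..rank (A n)}. int j * cartan (A n) i j)" by simp
qed

lemma A_Psi_cong:
  assumes n: "n \<ge> 2" and w: "w \<in> Psi (A n)"
  shows "int (n + 1) dvd (\<Sum>j\<in>{1..n}. int j * (2 * w j))"
proof -
  have v: "(\<lambda>i. 2 * w i) \<in> root_lattice (A n)" using w by (simp add: Psi_def)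
  show ?thesis using RL_func[OF v A_rows[OF n]] by simp
qed

lemma sum_two:
  assumes n: "n \<ge> 2" and z: "\<And>j. j \<noteq> 1 \<Longrightarrow> j \<noteq> n \<Longrightarrow> u j = 0"
  shows "(\<Sum>j\<in>{1..n}. int j * (2 * u j)) = 2 * u 1 + 2 * int n * u n"
proof -
  have "(\<Sum>j\<in>{1..n}. int j * (2 * u j)) = (\<Sum>j\<in>{1..n}. (if j = 1 then 2 * u 1 else 0) + (if j = n then 2 * int n * u n else 0))"
    by (rule sum.cong) (use z n in auto)
  also have "\<dots> = 2 * u 1 + 2 * int n * u n" using n by (simp add: sum.distrib sum.delta)
  finally show ?thesis .
qed

lemma not_dvd_2: "n \<ge> 2 \<Longrightarrow> \<not> int (n + 1) dvd 2"
proof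
  assume "n \<ge> 2" "int (n + 1) dvd 2"
  then have "int (n + 1) \<le> 2" by (intro zdvd_imp_le) simp_all
  then show False using \<open>n \<ge> 2\<close> by simp
qed

lemma not_dvd_2n: "n \<ge> 2 \<Longrightarrow> \<not> int (n + 1) dvd 2 * int n"
proof
  assume n: "n \<ge> 2" and d: "int (n + 1) dvd 2 * int n"
  have "int (n + 1) dvd 2 * int (n + 1)" by (rule dvd_triv_right)
  then have "int (n + 1) dvd 2 * int (n + 1) - 2 * int n" using d by (rule dvd_diff)
  moreover have "2 * int (n + 1) - 2 * int n = 2" by simp
  ultimately show False using not_dvd_2[OF n] by simp
qed

lemma A_card:
  assumes n: "n \<ge> 2"
  shows "card (Psi_min (A n)) \<ge> n + 1"
proof -
  let ?N = "n + 1"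
  have PN: "(\<lambda>j. int k * om i j) \<in> Psi (A n)"
    if i: "i \<in> {1..n}" and k: "k = ?N" for i k
  proof -
    have "(\<lambda>j. 2 * (int k * om i j)) = (\<lambda>j. 2 * int (n + 1) * om i j)" using k by (simp add: algebra_simps)
    then have "(\<lambda>j. 2 * (int k * om i j)) \<in> root_lattice (A n)" using A_big[OF i] by simp
    moreover have "(\<lambda>j. int k * om i j) \<in> dominant (A n)" using i by (auto simp: dominant_def weights_def om_def)
    ultimately show ?thesis by (simp add: Psi_def)
  qed
  define kk where "kk i = (LEAST k. k > 0 \<and> (\<lambda>j. int k * om i j) \<in> Psi (A n))" for i
  have kk: "kk i > 0 \<and> (\<lambda>j. int (kk i) * om i j) \<in> Psi (A n)" if i: "i \<in> {1..n}" for i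
    unfolding kk_def by (rule LeastI[of _ ?N]) (use PN[OF i] in auto)
  have kk_le: "kk i \<le> k" if "k > 0" "(\<lambda>j. int k * om i j) \<in> Psi (A n)" for i k
    unfolding kk_def by (rule Least_le) (use that in auto)
  define u where "u i = (\<lambda>j. int (kk i) * om i j)" for i
  have umin: "u i \<in> Psi_min (A n)" if i: "i \<in> {1..n}" for i
  proof (rule Psi_min_intro)
    show "u i \<in> Psi (A n)" using kk[OF i] by (simp add: u_def)
    show "u i \<noteq> (\<lambda>j. 0)"
    proof
      assume "u i = (\<lambda>j. 0)" then have "u i i = 0" by metis
      then show False using kk[OF i] by (simp add: u_def om_def)
    qed
    fix v assume v: "v \<in> Psi (A n)" "v \<noteq> (\<lambda>j. 0)" "\<forall>j. v j \<le> u i j"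
    have nn: "\<And>j. 0 \<le> v j" using Psi_nonneg[OF v(1)] .
    have z: "v j = 0" if "j \<noteq> i" for j using v(3)[rule_format, of j] nn[of j] that by (simp add: u_def om_def)
    obtain j where "v j \<ge> 1" using nz_coord[OF v(1,2)] by auto
    then have vi: "v i \<ge> 1" using z[of j] by (cases "j = i") auto
    define a where "a = nat (v i)"
    have va: "v i = int a" using vi unfolding a_def by simp
    have vfun: "v = (\<lambda>j. int a * om i j)" by (rule ext) (use z va in \<open>auto simp: om_def\<close>)
    have "kk i \<le> a" by (rule kk_le) (use vi va v(1) vfun in auto)
    moreover have "v i \<le> int (kk i)" using v(3)[rule_format, of i] by (simp add: u_def om_def)
    ultimately have "a = kk i" using va by simp
    then show "v = u i" unfolding vfun u_def by simp
  qed
  let ?e = "\<lambda>j. om 1 j + om n j"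
  have emin: "?e \<in> Psi_min (A n)"
  proof (rule Psi_min_intro)
    have "(\<lambda>j. 2 * ?e j) \<in> root_lattice (A n)" using A_pair[OF n] .
    moreover have "?e \<in> dominant (A n)" using n by (auto simp: dominant_def weights_def om_def)
    ultimately show "?e \<in> Psi (A n)" by (simp add: Psi_def)
    show "?e \<noteq> (\<lambda>j. 0)"
    proof
      assume "?e = (\<lambda>j. 0)" then have "?e 1 = 0" by metis
      then show False by (simp add: om_def split: if_splits)
    qed
    fix v assume v: "v \<in> Psi (A n)" "v \<noteq> (\<lambda>j. 0)" "\<forall>j. v j \<le> ?e j"
    have nn: "\<And>j. 0 \<le> v j" using Psi_nonneg[OF v(1)] .
    have z: "v j = 0" if "j \<noteq> 1" "j \<noteq> n" for j using v(3)[rule_format, of j] nn[of j] that by (simp add: om_def)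
    have b1: "v 1 \<le> 1" using v(3)[rule_format, of 1] n by (auto simp: om_def split: if_splits)
    have bn: "v n \<le> 1" using v(3)[rule_format, of n] n by (auto simp: om_def split: if_splits)
    have cong: "int (n + 1) dvd (2 * v 1 + 2 * int n * v n)"
      using A_Psi_cong[OF n v(1)] sum_two[OF n z] by simp
    obtain j where j: "v j \<ge> 1" using nz_coord[OF v(1,2)] by auto
    have v1: "v 1 = 1"
    proof (rule ccontr)
      assume "v 1 \<noteq> 1"
      then have a: "v 1 = 0" using b1 nn[of 1] by simp
      then have "j = n" using j z[of j] by (cases "j = 1"; cases "j = n") auto
      then have "v n = 1" using j bn by simp
      then have "int (n + 1) dvd 2 * int n" using cong a by simp
      then show False using not_dvd_2n[OF n] by blast
    qed
    have vn: "v n = 1"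
    proof (rule ccontr)
      assume "v n \<noteq> 1"
      then have "v n = 0" using bn nn[of n] by simp
      then have "int (n + 1) dvd 2" using cong v1 by simp
      then show False using not_dvd_2[OF n] by blast
    qed
    have v11: "v 1 = 1 \<and> v n = 1" using v1 vn by simp
    show "v = ?e" by (rule ext) (use z v11 n in \<open>auto simp: om_def\<close>)
  qed
  let ?T = "insert ?e (u ` {1..n})"
  have sub: "?T \<subseteq> Psi_min (A n)" using emin umin by auto
  have injU: "inj_on u {1..n}"
  proof (rule inj_onI)
    fix i i' assume i: "i \<in> {1..n}" "i' \<in> {1..n}" "u i = u i'"
    then have "u i i = u i' i" by simp
    then show "i = i'" using kk[OF i(1)] by (auto simp: u_def om_def split: if_splits)
  qed
  have eU: "?e \<notin> u ` {1..n}"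
  proof
    assume "?e \<in> u ` {1..n}"
    then obtain i where i: "i \<in> {1..n}" "?e = u i" by blast
    then have "?e 1 = u i 1" "?e n = u i n" by (metis i(2))+
    then show False using n by (auto simp: u_def om_def split: if_splits)
  qed
  have cT: "card ?T = n + 1" using injU eU by (simp add: card_image)
  have fin: "finite (Psi_min (A n))"
  proof (rule finite_subset)
    show "Psi_min (A n) \<subseteq> {f. \<forall>x. (x \<in> {1..n} \<longrightarrow> f x \<in> {0..int ?N}) \<and> (x \<notin> {1..n} \<longrightarrow> f x = 0)}"
    proof
      fix w assume w: "w \<in> Psi_min (A n)"
      have wP: "w \<in> Psi (A n)" using Psi_min_Psi[OF w] .
      have "w x \<le> int ?N" if x: "x \<in> {1..n}" for x
      proof (rule ccontr)
        assume "\<not> w x \<le> int ?N"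
        then have big: "w x > int ?N" by simp
        have le: "\<forall>j. int ?N * om x j \<le> w j" using big Psi_nonneg[OF wP] by (auto simp: om_def)
        have nz: "(\<lambda>j. int ?N * om x j) \<noteq> (\<lambda>j. 0)"
        proof
          assume "(\<lambda>j. int ?N * om x j) = (\<lambda>j. 0)" then have "int ?N * om x x = 0" by metis
          then show False by (simp add: om_def)
        qed
        have "(\<lambda>j. int ?N * om x j) = w" using Psi_below[OF w PN[OF x refl] nz le] .
        then have "int ?N * om x x = w x" by metis
        then show False using big by (simp add: om_def)
      qed
      then show "w \<in> {f. \<forall>x. (x \<in> {1..n} \<longrightarrow> f x \<in> {0..int ?N}) \<and> (x \<notin> {1..n} \<longrightarrow> f x = 0)}"
        using Psi_nonneg[OF wP] Psi_out[OF wP] by auto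
    qed
    show "finite {f. \<forall>x. (x \<in> {1..n} \<longrightarrow> f x \<in> {0..int ?N}) \<and> (x \<notin> {1..n} \<longrightarrow> f x = (0::int))}"
      by (rule finite_set_of_finite_funs) simp_all
  qed
  have "card ?T \<le> card (Psi_min (A n))" by (rule card_mono[OF fin sub])
  then show ?thesis using cT by simp
qed

lemma A1_card: "card (Psi_min (A 1)) = 1"
proof -
  have "\<forall>i\<in>{1..rank (A 1)}. (\<lambda>j. 2 * om i j) \<in> root_lattice (A 1)"
  proof
    fix i assume i: "i \<in> {1..rank (A 1)}"
    then have i1: "i = 1" by simp
    show "(\<lambda>j. 2 * om i j) \<in> root_lattice (A 1)"
    proof (rule RL_intro[where c="\<lambda>_. 1"])
      show "(\<lambda>j. 2 * om i j) \<in> weights (A 1)" using i1 by (auto simp: weights_def om_def)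
      show "\<forall>j\<in>{1..rank (A 1)}. 2 * om i j = (\<Sum>ia\<in>{1..rank (A 1)}. 1 * cartan (A 1) ia j)"
        using i1 by (simp add: om_def cartan_def)
    qed
  qed
  then show ?thesis using exp2 by fastforce
qed

lemma B_card: "n \<ge> 2 \<Longrightarrow> card (Psi_min (B n)) = n"
  using exp2[OF B_w] by simp

lemma C_card: "n \<ge> 2 \<Longrightarrow> card (Psi_min (C n)) = n"
  using exp2[OF C_w] by simp

lemma Deven_card:
  assumes "n = 2*m+2" "m \<ge> 1"
  shows "card (Psi_min (D n)) = n"
proof -
  have n4: "n \<ge> 4" using assms by simp
  have "\<forall>i\<in>{1..rank (D n)}. (\<lambda>j. 2 * om i j) \<in> root_lattice (D n)"
  proof
    fix i assume i: "i \<in> {1..rank (D n)}"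
    then have "i \<in> {1..n-2} \<or> i = n - 1 \<or> i = n" by auto
    then show "(\<lambda>j. 2 * om i j) \<in> root_lattice (D n)"
      using D_low[OF n4] D_even1[OF assms] D_even2[OF assms] by blast
  qed
  then show ?thesis using exp2 by fastforce
qed

lemma E7_card: "card (Psi_min E7) = 7" using exp2[OF E7_w] by simp
lemma E8_card: "card (Psi_min E8) = 8" using exp2[OF E8_w] by simp
lemma F4_card: "card (Psi_min F4) = 4" using exp2[OF F4_w] by simp
lemma G2_card: "card (Psi_min G2) = 2" using exp2[OF G2_w] by simp

theorem lemma3p5:
  assumes "valid_type t"
  shows "(card (Psi_min t) = rank t \<longleftrightarrow>
            t = A 1 \<or> (\<exists>n. t = B n) \<or> (\<exists>n. t = C n) \<or> (\<exists>k. t = D (2 * k + 2))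
            \<or> t = E7 \<or> t = E8 \<or> t = F4 \<or> t = G2)
       \<and> (t = E6 \<longrightarrow> card (Psi_min t) = 14)
       \<and> (\<forall>k. t = D (2 * k + 3) \<longrightarrow> card (Psi_min t) = rank t + 1)
       \<and> (\<forall>n. t = A n \<and> n \<ge> 2 \<longrightarrow> card (Psi_min t) \<ge> rank t + 1)"
proof (cases t)
  case (A n)
  then have n: "n \<ge> 1" using assms by simp
  show ?thesis
  proof (cases "n = 1")
    case True then show ?thesis using A A1_card by simp
  next
    case False
    then have n2: "n \<ge> 2" using n by simp
    have "card (Psi_min (A n)) \<ge> n + 1" by (rule A_card[OF n2])
    then show ?thesis using A n2 by auto
  qed
next
  case (B n) then show ?thesis using assms B_card by auto
next
  case (C n) then show ?thesis using assms C_card by auto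
next
  case (D n)
  then have n4: "n \<ge> 4" using assms by simp
  show ?thesis
  proof (cases "even n")
    case True
    have "\<exists>m. n = 2*m+2 \<and> m \<ge> 1" using n4 True by presburger
    then obtain m where m: "n = 2*m+2" "m \<ge> 1" by blast
    have c: "card (Psi_min (D n)) = n" by (rule Deven_card[OF m])
    have "\<not> (\<exists>k. n = 2 * k + 3)" using True by presburger
    then show ?thesis using D c m by auto
  next
    case False
    have "\<exists>m. n = 2*m+3 \<and> m \<ge> 1" using n4 False by presburger
    then obtain m where m: "n = 2*m+3" "m \<ge> 1" by blast
    have c: "card (Psi_min (D n)) = n + 1" by (rule Dodd_card[OF m])
    have "\<not> (\<exists>k. n = 2 * k + 2)" using False by presburger
    then show ?thesis using D c m by auto
  qed
next
  case E6 then show ?thesis using E6_card by simp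
next
  case E7 then show ?thesis using E7_card by simp
next
  case E8 then show ?thesis using E8_card by simp
next
  case F4 then show ?thesis using F4_card by simp
next
  case G2 then show ?thesis using G2_card by simp
qed

end
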